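(* Let $\beta>0$, let $m\ge1$, and for integers $1\le a<b<c\le n$ let $N_{a,b,c}$ be the number of triangles in $G^n_{m,\beta}$ on the vertices $w_a,w_b,w_c$. Then \[ \mathbb{E}[N_{a,b,c}]=\left(m(m-1)\frac{(1+\beta)^2}{(2+\beta)^2}+m(m-1)^2\frac{(1+\beta)^3}{(2+\beta)^3}\right)\left(\frac{1}{a^2b^{2+\beta}c^{2+2\beta}}\right)^{1/(2+\beta)}\left(1+O(1/a)\right), \] where the implied constant depends only on $\beta$ and $m$.
   Context: Fix a real $\beta>0$ and a positive integer $m$. The random tree process $(G^n_{1,\beta})_{n\ge1}$ is defined as follows. $G^1_{1,\beta}$ consists of a single vertex $v_1$ and no edges. Given $G^n_{1,\beta}$ with vertices $v_1,\dots,v_n$ and directed edges $e_2,\dots,e_n$ (where $e_i$ is the edge whose tail is $v_i$), $G^{n+1}_{1,\beta}$ is obtained by adding a vertex $v_{n+1}$ and a directed edge $e_{n+1}$ with tail $v_{n+1}$ and head a "target vertex" determined by a random variable $f_{n+1}$, independent of $f_2,\dots,f_n$, taking values in $\Omega_{n+1}=\{(i,v):1\le i\le n\}\cup\{(i,h),(i,t):2\le i\le n\}$ with $\Pr(f_{n+1}=(i,v))=\beta/((2+\beta)n-2)$ and $\Pr(f_{n+1}=(i,h))=\Pr(f_{n+1}=(i,t))=1/((2+\beta)n-2)$. If $f_{n+1}=(i,v)$ the target is $v_i$ (chosen "uniformly"); if $f_{n+1}=(i,h)$ the target is the head of $e_i$, and if $f_{n+1}=(i,t)$ the target is the tail $v_i$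 of $e_i$ (chosen "preferentially", by copying the head half-edge, resp. tail half-edge, of $e_i$). Consequently the target is $v_i$ with probability $(d_n(v_i)+\beta)/((2+\beta)n-2)$, where $d_n(v)$ is the degree of $v$ in $G^n_{1,\beta}$. Each edge is regarded as two half-edges, one at each endpoint; the degree of a vertex is the number of half-edges at it (loops count twice). For $n\ge1$, $G^n_{m,\beta}$ is the undirected multigraph obtained from $G^{nm}_{1,\beta}$ by identifying, for each $j=1,\dots,n$, the vertices $v_{(j-1)m+1},\dots,v_{jm}$ into a single vertex $w_j$, keeping all edges (so loops and multiple edges may occur). A triangle in a multigraph is a set of three edges joining three distinct vertices pairwise; triangles are counted with multiplicity, i.e. the number of triangles on $w_a,w_b,w_c$ is the number of such sets of three edges. *)

theory Defs
  imports "HOL-Probability.Probability"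
begin

text \<open>Elements of \<Omega>_{n+1}: (i,v), (i,h), (i,t).\<close>
datatype choice = ChV nat | ChH nat | ChT nat

text \<open>Weight of a choice in \<Omega>_{n+1} (the step adding vertex n+1 to G^n_{1,beta}).\<close>
definition choice_weight :: "real \<Rightarrow> nat \<Rightarrow> choice \<Rightarrow> real" where
  "choice_weight \<beta> n f = (case f of
      ChV i \<Rightarrow> if 1 \<le> i \<and> i \<le> n then \<beta> / ((2 + \<beta>) * real n - 2) else 0
    | ChH i \<Rightarrow> if 2 \<le> i \<and> i \<le> n then 1 / ((2 + \<beta>) * real n - 2) else 0
    | ChT i \<Rightarrow> if 2 \<le> i \<and> i \<le> n then 1 / ((2 + \<beta>) * real n - 2) else 0)"

definition choice_pmf :: "real \<Rightarrow> nat \<Rightarrow> choice pmf" where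
  "choice_pmf \<beta> n = embed_pmf (choice_weight \<beta> n)"

text \<open>A state of G^N_{1,beta} is the head map: edge e_i (2 \<le> i \<le> N) goes from v_i to v_(hh i).
  Vertices are indexed by 1..N.\<close>
fun target :: "(nat \<Rightarrow> nat) \<Rightarrow> choice \<Rightarrow> nat" where
  "target hh (ChV i) = i"
| "target hh (ChH i) = hh i"
| "target hh (ChT i) = i"

primrec tree_proc :: "real \<Rightarrow> nat \<Rightarrow> (nat \<Rightarrow> nat) pmf" where
  "tree_proc \<beta> 0 = return_pmf (\<lambda>_. 0)"
| "tree_proc \<beta> (Suc k) =
     (if k = 0 then return_pmf (\<lambda>_. 0)
      else bind_pmf (tree_proc \<beta> k)
             (\<lambda>hh. map_pmf (\<lambda>f. hh(Suc k := target hh f)) (choice_pmf \<beta> k)))"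

text \<open>Vertex v_i of G^{nm}_{1,beta} becomes w_j with j = (i-1) div m + 1.\<close>
definition merged :: "nat \<Rightarrow> nat \<Rightarrow> nat" where
  "merged m i = (i - 1) div m + 1"

definition joins :: "nat \<Rightarrow> (nat \<Rightarrow> nat) \<Rightarrow> nat \<Rightarrow> nat \<Rightarrow> nat \<Rightarrow> bool" where
  "joins m hh x p q \<longleftrightarrow>
     (merged m x = p \<and> merged m (hh x) = q) \<or> (merged m x = q \<and> merged m (hh x) = p)"

text \<open>Number of triangles (with multiplicity) on w_a, w_b, w_c in G^n_{m,beta}:
  choices of an edge joining w_a w_b, one joining w_b w_c and one joining w_a w_c
  (for distinct a,b,c these three edges are automatically distinct, so this counts
  the sets of three edges).\<close>
definition triangles :: "nat \<Rightarrow> nat \<Rightarrow> (nat \<Rightarrow> nat) \<Rightarrow> nat \<Rightarrow> nat \<Rightarrow> nat \<Rightarrow> nat" where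
  "triangles m n hh a b c = card {(x, y, z). x \<in> {2..n*m} \<and> y \<in> {2..n*m} \<and> z \<in> {2..n*m} \<and>
      joins m hh x a b \<and> joins m hh y b c \<and> joins m hh z a c}"

definition expected_triangles :: "real \<Rightarrow> nat \<Rightarrow> nat \<Rightarrow> nat \<Rightarrow> nat \<Rightarrow> nat \<Rightarrow> real" where
  "expected_triangles \<beta> m n a b c =
     measure_pmf.expectation (tree_proc \<beta> (n * m)) (\<lambda>hh. real (triangles m n hh a b c))"

definition main_term :: "real \<Rightarrow> nat \<Rightarrow> nat \<Rightarrow> nat \<Rightarrow> nat \<Rightarrow> real" where
  "main_term \<beta> m a b c =
     (real m * (real m - 1) * (1 + \<beta>)^2 / (2 + \<beta>)^2
      + real m * (real m - 1)^2 * (1 + \<beta>)^3 / (2 + \<beta>)^3)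
     * (1 / (real a ^ 2 * real b powr (2 + \<beta>) * real c powr (2 + 2 * \<beta>))) powr (1 / (2 + \<beta>))"

end

theory Submission
  imports Defs
begin

definition Dn :: "real \<Rightarrow> nat \<Rightarrow> real" where "Dn \<beta> t = (2 + \<beta>) * real t - 2"
definition cnt :: "(nat \<Rightarrow> nat) \<Rightarrow> nat \<Rightarrow> nat \<Rightarrow> nat" where
  "cnt hh t u = card {j\<in>{2..t}. hh j = u}"
definition wt :: "real \<Rightarrow> (nat \<Rightarrow> nat) \<Rightarrow> nat \<Rightarrow> nat \<Rightarrow> real" where
  "wt \<beta> hh t u = real (cnt hh t u) + (if 2 \<le> u then 1 else 0) + \<beta>"
definition invt :: "nat \<Rightarrow> (nat \<Rightarrow> nat) \<Rightarrow> bool" where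
  "invt t hh \<longleftrightarrow> (\<forall>j\<in>{2..t}. 1 \<le> hh j \<and> hh j < j)"

definition Om :: "nat \<Rightarrow> choice set" where
  "Om k = ChV ` {1..k} \<union> ChH ` {2..k} \<union> ChT ` {2..k}"

lemma Dn_pos: "\<beta> > 0 \<Longrightarrow> k \<ge> 1 \<Longrightarrow> Dn \<beta> k > 0"
  unfolding Dn_def
proof -
  assume "\<beta> > 0" "k \<ge> 1"
  then have "real k \<ge> 1" by simp
  then have "(2+\<beta>) * real k \<ge> 2 + \<beta>" using \<open>\<beta>>0\<close> by (simp add: mult_le_cancel_left1)
  then show "(2 + \<beta>) * real k - 2 > 0" using \<open>\<beta>>0\<close> by linarith
qed

lemma Dn_ge: "\<beta> > 0 \<Longrightarrow> Dn \<beta> k \<ge> \<beta> * real k - 2 + 2 * real k"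
  unfolding Dn_def by (simp add: algebra_simps)

lemma Om_finite: "finite (Om k)" unfolding Om_def by auto

lemma weight_nonneg: "\<beta> > 0 \<Longrightarrow> k \<ge> 1 \<Longrightarrow> choice_weight \<beta> k f \<ge> 0"
  using Dn_pos[of \<beta> k] unfolding choice_weight_def Dn_def by (auto split: choice.splits)

lemma weight_zero: "f \<notin> Om k \<Longrightarrow> choice_weight \<beta> k f = 0"
  unfolding choice_weight_def Om_def by (auto split: choice.splits)

lemma sum_Om:
  fixes g :: "choice \<Rightarrow> real"
  shows "(\<Sum>f\<in>Om k. g f) = (\<Sum>i\<in>{1..k}. g (ChV i)) + (\<Sum>i\<in>{2..k}. g (ChH i)) + (\<Sum>i\<in>{2..k}. g (ChT i))"
proof -
  have d1: "(ChV ` {1..k}) \<inter> (ChH ` {2..k} \<union> ChT ` {2..k}) = {}" by auto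
  have d2: "ChH ` {2..k} \<inter> ChT ` {2..k} = {}" by auto
  have "(\<Sum>f\<in>Om k. g f) = (\<Sum>f\<in>ChV ` {1..k}. g f) + (\<Sum>f\<in>ChH ` {2..k} \<union> ChT ` {2..k}. g f)"
    unfolding Om_def by (subst Un_assoc, rule sum.union_disjoint) (use d1 in auto)
  also have "(\<Sum>f\<in>ChH ` {2..k} \<union> ChT ` {2..k}. g f) = (\<Sum>f\<in>ChH ` {2..k}. g f) + (\<Sum>f\<in>ChT ` {2..k}. g f)"
    by (rule sum.union_disjoint) (use d2 in auto)
  finally show ?thesis by (simp add: sum.reindex inj_on_def)
qed

lemma weight_sum: "\<beta> > 0 \<Longrightarrow> k \<ge> 1 \<Longrightarrow> (\<Sum>f\<in>Om k. choice_weight \<beta> k f) = 1"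
proof -
  assume b: "\<beta> > 0" and k: "k \<ge> 1"
  have D: "Dn \<beta> k > 0" using Dn_pos b k by auto
  have "(\<Sum>f\<in>Om k. choice_weight \<beta> k f) = real k * \<beta> / Dn \<beta> k + real (k-1) / Dn \<beta> k + real (k-1) / Dn \<beta> k"
    unfolding sum_Om by (simp add: choice_weight_def Dn_def)
  also have "\<dots> = (real k * \<beta> + 2 * real (k-1)) / Dn \<beta> k" by (simp add: add_divide_distrib)
  also have "real k * \<beta> + 2 * real (k-1) = Dn \<beta> k" using k unfolding Dn_def by (simp add: of_nat_diff algebra_simps)
  finally show ?thesis using D by simp
qed

lemma pmf_choice: assumes "\<beta> > 0" "k \<ge> 1"
  shows "pmf (choice_pmf \<beta> k) f = choice_weight \<beta> k f"
  unfolding choice_pmf_def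
proof (rule pmf_embed_pmf)
  show "\<And>x. 0 \<le> choice_weight \<beta> k x" using weight_nonneg assms by auto
  have "(\<integral>\<^sup>+x. ennreal (choice_weight \<beta> k x) \<partial>count_space UNIV) = (\<Sum>x\<in>Om k. ennreal (choice_weight \<beta> k x))"
    by (rule nn_integral_count_space') (auto simp: Om_finite weight_zero)
  also have "\<dots> = ennreal (\<Sum>x\<in>Om k. choice_weight \<beta> k x)"
    by (rule sum_ennreal) (use weight_nonneg assms in auto)
  finally show "(\<integral>\<^sup>+x. ennreal (choice_weight \<beta> k x) \<partial>count_space UNIV) = 1"
    using weight_sum assms by simp
qed

lemma set_choice: assumes "\<beta> > 0" "k \<ge> 1" shows "set_pmf (choice_pmf \<beta> k) \<subseteq> Om k"
  using weight_zero pmf_choice[OF assms] by (auto simp: set_pmf_eq)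

lemma exp_choice: assumes "\<beta> > 0" "k \<ge> 1"
  shows "measure_pmf.expectation (choice_pmf \<beta> k) (h::choice \<Rightarrow> real) = (\<Sum>f\<in>Om k. choice_weight \<beta> k f * h f)"
  by (subst integral_measure_pmf[of "Om k"]) (use set_choice[OF assms] pmf_choice[OF assms] Om_finite in auto)


lemma tree_Suc: "k \<ge> 1 \<Longrightarrow> tree_proc \<beta> (Suc k) =
   bind_pmf (tree_proc \<beta> k) (\<lambda>hh. map_pmf (\<lambda>f. hh(Suc k := target hh f)) (choice_pmf \<beta> k))"
  by simp

lemma tree_one: "tree_proc \<beta> (Suc 0) = return_pmf (\<lambda>_. 0)" by simp

lemma finite_tree: assumes "\<beta> > 0" shows "finite (set_pmf (tree_proc \<beta> t))"
proof (induction t)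
  case 0 then show ?case by simp
next
  case (Suc k)
  show ?case
  proof (cases "k = 0")
    case True then show ?thesis by simp
  next
    case False
    have fin: "finite (set_pmf (choice_pmf \<beta> k))"
      using set_choice[OF assms, of k] False Om_finite finite_subset by auto
    show ?thesis using False Suc fin by (simp add: set_bind_pmf)
  qed
qed

lemma target_range: "invt k hh \<Longrightarrow> f \<in> Om k \<Longrightarrow> 1 \<le> target hh f \<and> target hh f \<le> k"
  unfolding invt_def Om_def by (cases f) auto

lemma inv_tree: assumes "\<beta> > 0" shows "hh \<in> set_pmf (tree_proc \<beta> t) \<Longrightarrow> invt t hh"
proof (induction t arbitrary: hh)
  case 0 then show ?case by (simp add: invt_def)
next
  case (Suc k)
  show ?case
  proof (cases "k = 0")
    case True then show ?thesis by (simp add: invt_def)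
  next
    case False
    then obtain h0 f where h0: "h0 \<in> set_pmf (tree_proc \<beta> k)" and f: "f \<in> set_pmf (choice_pmf \<beta> k)"
      and hh: "hh = h0(Suc k := target h0 f)"
      using Suc.prems by (auto simp: set_bind_pmf)
    have i0: "invt k h0" using Suc.IH h0 by auto
    have "f \<in> Om k" using set_choice[OF assms, of k] False f by auto
    then have "1 \<le> target h0 f \<and> target h0 f \<le> k" using target_range i0 by auto
    then show ?thesis using i0 unfolding hh invt_def by auto
  qed
qed

lemma sum_fibers:
  assumes "invt k hh"
  shows "(\<Sum>i\<in>{2..k}. (\<phi>::nat\<Rightarrow>real) (hh i)) = (\<Sum>u\<in>{1..k}. real (cnt hh k u) * \<phi> u)"
proof -
  have sub: "hh ` {2..k} \<subseteq> {1..k}"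
  proof
    fix x assume "x \<in> hh ` {2..k}"
    then obtain j where j: "j \<in> {2..k}" "x = hh j" by auto
    then have "1 \<le> hh j" "hh j < j" using assms unfolding invt_def by auto
    then show "x \<in> {1..k}" using j by auto
  qed
  have "(\<Sum>i\<in>{2..k}. \<phi> (hh i)) = (\<Sum>u\<in>{1..k}. \<Sum>i\<in>{j\<in>{2..k}. hh j = u}. \<phi> (hh i))"
    by (rule sum.group[symmetric]) (use sub in auto)
  also have "\<dots> = (\<Sum>u\<in>{1..k}. real (cnt hh k u) * \<phi> u)"
    by (rule sum.cong) (auto simp: cnt_def)
  finally show ?thesis .
qed

lemma sum_if2: "(\<Sum>u\<in>{1..k}. (if 2 \<le> u then (\<phi>::nat\<Rightarrow>real) u else 0)) = (\<Sum>u\<in>{2..k}. \<phi> u)"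
proof -
  have "(\<Sum>u\<in>{1..k}. (if 2 \<le> u then \<phi> u else 0)) = (\<Sum>u\<in>{u\<in>{1..k}. 2 \<le> u}. \<phi> u)"
    by (rule sum.inter_filter[symmetric]) auto
  also have "{u\<in>{1..k}. 2 \<le> u} = {2..k}" by auto
  finally show ?thesis .
qed

lemma exp_target:
  assumes b: "\<beta> > 0" and k: "k \<ge> 1" and iv: "invt k hh"
  shows "measure_pmf.expectation (choice_pmf \<beta> k) (\<lambda>f. (\<phi>::nat\<Rightarrow>real) (target hh f))
         = (\<Sum>u\<in>{1..k}. wt \<beta> hh k u * \<phi> u) / Dn \<beta> k"
proof -
  have "measure_pmf.expectation (choice_pmf \<beta> k) (\<lambda>f. \<phi> (target hh f))
      = (\<Sum>f\<in>Om k. choice_weight \<beta> k f * \<phi> (target hh f))" by (rule exp_choice[OF b k])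
  also have "\<dots> = (\<beta> * (\<Sum>i\<in>{1..k}. \<phi> i) + (\<Sum>i\<in>{2..k}. \<phi> (hh i)) + (\<Sum>i\<in>{2..k}. \<phi> i)) / Dn \<beta> k"
    unfolding sum_Om by (simp add: choice_weight_def Dn_def sum_distrib_left add_divide_distrib sum_divide_distrib)
  also have "\<dots> = (\<Sum>u\<in>{1..k}. wt \<beta> hh k u * \<phi> u) / Dn \<beta> k"
  proof -
    have pw: "\<And>u. wt \<beta> hh k u * \<phi> u = real (cnt hh k u) * \<phi> u + (if 2 \<le> u then \<phi> u else 0) + \<beta> * \<phi> u"
      unfolding wt_def by (simp add: algebra_simps)
    show ?thesis unfolding pw sum.distrib sum_if2 sum_fibers[OF iv] sum_distrib_left[symmetric]
      by (simp add: algebra_simps)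
  qed
  finally show ?thesis .
qed

lemma sum_wt: assumes "invt k hh" and k1: "k \<ge> 1" shows "(\<Sum>u\<in>{1..k}. wt \<beta> hh k u) = Dn \<beta> k"
proof -
  have a: "(\<Sum>u\<in>{1..k}. real (cnt hh k u)) = real (k - 1)"
    using sum_fibers[OF assms(1), where \<phi>="\<lambda>_. 1"] by simp
  have b: "(\<Sum>u\<in>{1..k}. (if 2 \<le> u then 1 else 0::real)) = real (k - 1)"
    using sum_if2[where k=k and \<phi>="\<lambda>_. 1"] by simp
  show ?thesis unfolding wt_def sum.distrib a b
    using k1 by (cases k) (auto simp: Dn_def algebra_simps)
qed


definition pend :: "(nat \<times> nat) set \<Rightarrow> nat \<Rightarrow> nat \<Rightarrow> nat" where
  "pend E t u = card {p\<in>E. snd p = u \<and> t < fst p}"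
definition fires :: "(nat \<times> nat) set \<Rightarrow> nat \<Rightarrow> bool" where
  "fires E t \<longleftrightarrow> (\<exists>p\<in>E. fst p = Suc t)"
definition indic :: "(nat \<times> nat) set \<Rightarrow> nat \<Rightarrow> (nat \<Rightarrow> nat) \<Rightarrow> real" where
  "indic E t hh = (\<Prod>p\<in>E. if fst p \<le> t then (if hh (fst p) = snd p then 1 else 0) else 1)"
definition Ft :: "real \<Rightarrow> (nat \<times> nat) set \<Rightarrow> nat \<Rightarrow> (nat \<Rightarrow> nat) \<Rightarrow> real" where
  "Ft \<beta> E t hh = indic E t hh * (\<Prod>u\<in>{1..t}. pochhammer (wt \<beta> hh t u) (pend E t u))"
definition gfac :: "real \<Rightarrow> (nat \<times> nat) set \<Rightarrow> nat \<Rightarrow> real" where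
  "gfac \<beta> E s = (if fires E s then 1 / Dn \<beta> s else 1 + real (\<Sum>u\<in>{1..s}. pend E s u) / Dn \<beta> s)"
definition w0 :: "real \<Rightarrow> nat \<Rightarrow> real" where "w0 \<beta> u = (if u = 1 then \<beta> else 1 + \<beta>)"
definition init :: "real \<Rightarrow> (nat \<times> nat) set \<Rightarrow> nat \<Rightarrow> real" where
  "init \<beta> E t = (\<Prod>u\<in>{1..t}. pochhammer (w0 \<beta> u) (pend E u u))"
definition good :: "(nat \<times> nat) set \<Rightarrow> bool" where
  "good E \<longleftrightarrow> finite E \<and> (\<forall>p\<in>E. 1 \<le> snd p \<and> snd p < fst p) \<and> (\<forall>p\<in>E. \<forall>q\<in>E. fst p = fst q \<longrightarrow> p = q)"

lemma poch_shift: "(x::real) * pochhammer (x+1) k = pochhammer x k * (x + real k)"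
  by (metis pochhammer_Suc pochhammer_rec)

lemma prod_bump:
  assumes "finite U" "u \<in> U"
  shows "(\<Prod>u'\<in>U. pochhammer (w u' + (if u' = u then 1 else 0)) (k u' :: nat))
       = pochhammer (w u + 1) (k u) * (\<Prod>u'\<in>U-{u}. pochhammer ((w u')::real) (k u'))"
  by (subst prod.remove[OF assms]) (auto intro!: prod.cong)

lemma prod_plain:
  assumes "finite U" "u \<in> U"
  shows "(\<Prod>u'\<in>U. pochhammer ((w u')::real) (k u'))
       = pochhammer (w u) (k u) * (\<Prod>u'\<in>U-{u}. pochhammer (w u') (k u'))"
  by (subst prod.remove[OF assms]) auto

lemma cnt_upd:
  assumes iv: "invt t hh" and u: "u \<le> t" and tau: "\<tau> \<le> t" and t1: "t \<ge> 1"
  shows "cnt (hh(Suc t := \<tau>)) (Suc t) u = cnt hh t u + (if \<tau> = u then 1 else 0)"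
proof -
  have eq: "{j\<in>{2..Suc t}. (hh(Suc t := \<tau>)) j = u} = {j\<in>{2..t}. hh j = u} \<union> (if \<tau> = u then {Suc t} else {})"
    using t1 by (auto simp: le_Suc_eq)
  have fin: "finite {j\<in>{2..t}. hh j = u}" by auto
  have nin: "Suc t \<notin> {j\<in>{2..t}. hh j = u}" by auto
  show ?thesis unfolding cnt_def eq using fin nin by (auto simp: card_insert_if)
qed

lemma cnt_new:
  assumes iv: "invt t hh" and tau: "\<tau> \<le> t"
  shows "cnt (hh(Suc t := \<tau>)) (Suc t) (Suc t) = 0"
proof -
  have "{j\<in>{2..Suc t}. (hh(Suc t := \<tau>)) j = Suc t} = {}"
  proof (rule ccontr)
    assume "{j\<in>{2..Suc t}. (hh(Suc t := \<tau>)) j = Suc t} \<noteq> {}"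
    then obtain j where j: "j \<in> {2..Suc t}" "(hh(Suc t := \<tau>)) j = Suc t" by blast
    show False
    proof (cases "j = Suc t")
      case True then show False using j tau by simp
    next
      case False
      then have "j \<in> {2..t}" "hh j = Suc t" using j by auto
      then show False using iv unfolding invt_def by fastforce
    qed
  qed
  then show ?thesis unfolding cnt_def by simp
qed

lemma wt_upd:
  assumes "invt t hh" "u \<le> t" "\<tau> \<le> t" "t \<ge> 1"
  shows "wt \<beta> (hh(Suc t := \<tau>)) (Suc t) u = wt \<beta> hh t u + (if \<tau> = u then 1 else 0)"
  using cnt_upd[OF assms] unfolding wt_def by auto

lemma wt_new:
  assumes "invt t hh" "\<tau> \<le> t" "t \<ge> 1"
  shows "wt \<beta> (hh(Suc t := \<tau>)) (Suc t) (Suc t) = 1 + \<beta>"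
  using cnt_new[OF assms(1,2)] assms(3) unfolding wt_def by auto

lemma indic_upd:
  assumes "finite E"
  shows "indic E (Suc t) (hh(Suc t := \<tau>)) = indic E t hh * (\<Prod>p\<in>E. if fst p = Suc t then (if \<tau> = snd p then 1 else 0) else 1)"
  unfolding indic_def prod.distrib[symmetric]
  by (rule prod.cong) (auto simp: le_Suc_eq)


lemma Psi_form:
  assumes iv: "invt t hh" and t1: "t \<ge> 1" and u: "u \<in> {1..t}" and fE: "finite E"
  shows "Ft \<beta> E (Suc t) (hh(Suc t := u)) = indic E t hh
      * (\<Prod>p\<in>E. if fst p = Suc t then (if u = snd p then 1 else 0) else 1)
      * (\<Prod>u'\<in>{1..t}. pochhammer (wt \<beta> hh t u' + (if u' = u then 1 else 0)) (pend E (Suc t) u'))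
      * pochhammer (1 + \<beta>) (pend E (Suc t) (Suc t))"
proof -
  have ut: "u \<le> t" using u by auto
  have set: "{1..Suc t} = insert (Suc t) {1..t}" by auto
  have "(\<Prod>u'\<in>{1..Suc t}. pochhammer (wt \<beta> (hh(Suc t := u)) (Suc t) u') (pend E (Suc t) u'))
      = pochhammer (wt \<beta> (hh(Suc t := u)) (Suc t) (Suc t)) (pend E (Suc t) (Suc t)) *
        (\<Prod>u'\<in>{1..t}. pochhammer (wt \<beta> (hh(Suc t := u)) (Suc t) u') (pend E (Suc t) u'))"
    unfolding set by (rule prod.insert) auto
  also have "\<dots> = pochhammer (1 + \<beta>) (pend E (Suc t) (Suc t)) *
        (\<Prod>u'\<in>{1..t}. pochhammer (wt \<beta> hh t u' + (if u' = u then 1 else 0)) (pend E (Suc t) u'))"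
    using wt_new[OF iv ut t1] wt_upd[OF iv _ ut t1] by (auto intro!: prod.cong)
  finally show ?thesis unfolding Ft_def indic_upd[OF fE] by (simp add: algebra_simps)
qed

lemma step_inner:
  assumes b: "\<beta> > 0" and t1: "t \<ge> 1" and iv: "invt t hh" and gE: "good E"
  shows "measure_pmf.expectation (choice_pmf \<beta> t) (\<lambda>f. Ft \<beta> E (Suc t) (hh(Suc t := target hh f)))
       = gfac \<beta> E t * pochhammer (1 + \<beta>) (pend E (Suc t) (Suc t)) * Ft \<beta> E t hh"
proof -
  have fE: "finite E" using gE unfolding good_def by auto
  define \<Psi> where "\<Psi> u = Ft \<beta> E (Suc t) (hh(Suc t := u))" for u
  define C0 where "C0 = indic E t hh"
  define c1 where "c1 = pochhammer (1 + \<beta>) (pend E (Suc t) (Suc t))"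
  define k where "k = pend E t"
  define w where "w = wt \<beta> hh t"
  define P where "P = (\<Prod>u'\<in>{1..t}. pochhammer (w u') (k u'))"
  have D: "Dn \<beta> t > 0" using Dn_pos b t1 by auto
  have LHS: "measure_pmf.expectation (choice_pmf \<beta> t) (\<lambda>f. Ft \<beta> E (Suc t) (hh(Suc t := target hh f)))
      = (\<Sum>u\<in>{1..t}. w u * \<Psi> u) / Dn \<beta> t"
    unfolding \<Psi>_def w_def by (rule exp_target[OF b t1 iv])
  have FtP: "Ft \<beta> E t hh = C0 * P" unfolding Ft_def C0_def P_def k_def w_def by simp
  show ?thesis
  proof (cases "fires E t")
    case False
    have fire1: "(\<Prod>p\<in>E. if fst p = Suc t then (if u = snd p then 1 else 0) else (1::real)) = 1" for u
      using False unfolding fires_def by (auto intro!: prod.neutral)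
    have kk: "pend E (Suc t) u' = k u'" for u'
    proof -
      have e: "Suc t < fst p \<longleftrightarrow> t < fst p" if "p \<in> E" for p
        using False that unfolding fires_def by (metis Suc_lessD Suc_lessI)
      have "{p\<in>E. snd p = u' \<and> Suc t < fst p} = {p\<in>E. snd p = u' \<and> t < fst p}"
        using e by blast
      then show ?thesis unfolding pend_def k_def by simp
    qed
    have "w u * \<Psi> u = C0 * c1 * (P * (w u + real (k u)))" if u: "u \<in> {1..t}" for u
    proof -
      have "w u * \<Psi> u = C0 * c1 * (w u * pochhammer (w u + 1) (k u)) * (\<Prod>u'\<in>{1..t}-{u}. pochhammer (w u') (k u'))"
        unfolding \<Psi>_def Psi_form[OF iv t1 u fE] fire1 kk C0_def c1_def
        using prod_bump[of "{1..t}" u w k] u unfolding w_def by (simp add: algebra_simps)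
      also have "\<dots> = C0 * c1 * (P * (w u + real (k u)))"
      proof -
        have pp: "P = pochhammer (w u) (k u) * (\<Prod>u'\<in>{1..t}-{u}. pochhammer (w u') (k u'))"
          unfolding P_def by (rule prod_plain) (use u in auto)
        show ?thesis unfolding poch_shift pp by (simp add: algebra_simps)
      qed
      finally show ?thesis .
    qed
    then have "(\<Sum>u\<in>{1..t}. w u * \<Psi> u) = C0 * c1 * P * ((\<Sum>u\<in>{1..t}. w u) + real (\<Sum>u\<in>{1..t}. k u))"
      by (simp add: sum_distrib_left sum.distrib algebra_simps)
    also have "(\<Sum>u\<in>{1..t}. w u) = Dn \<beta> t" unfolding w_def by (rule sum_wt[OF iv t1])
    finally have "(\<Sum>u\<in>{1..t}. w u * \<Psi> u) / Dn \<beta> t = C0 * c1 * P * (1 + real (\<Sum>u\<in>{1..t}. k u) / Dn \<beta> t)"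
      using D by (simp add: field_simps)
    then show ?thesis unfolding LHS FtP gfac_def c1_def k_def using False by (simp add: algebra_simps)
  next
    case True
    then obtain p0 where p0: "p0 \<in> E" "fst p0 = Suc t" unfolding fires_def by auto
    define v0 where "v0 = snd p0"
    have v0: "v0 \<in> {1..t}" using gE p0 unfolding good_def v0_def by auto
    have uniq: "p \<in> E \<Longrightarrow> fst p = Suc t \<Longrightarrow> p = p0" for p using gE p0 unfolding good_def by auto
    have fireE: "(\<Prod>p\<in>E. if fst p = Suc t then (if u = snd p then 1 else 0) else (1::real)) = (if u = v0 then 1 else 0)" for u
    proof -
      have "(\<Prod>p\<in>E. if fst p = Suc t then (if u = snd p then 1 else 0) else (1::real))
          = (if fst p0 = Suc t then (if u = snd p0 then 1 else 0) else 1) * (\<Prod>p\<in>E-{p0}. if fst p = Suc t then (if u = snd p then 1 else 0) else (1::real))"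
        by (rule prod.remove[OF fE p0(1)])
      also have "(\<Prod>p\<in>E-{p0}. if fst p = Suc t then (if u = snd p then 1 else 0) else (1::real)) = 1"
      proof (rule prod.neutral, rule ballI)
        fix p assume "p \<in> E - {p0}"
        then have "fst p \<noteq> Suc t" using uniq by blast
        then show "(if fst p = Suc t then (if u = snd p then 1 else 0) else (1::real)) = 1" by simp
      qed
      finally show ?thesis using p0 v0_def by simp
    qed
    have kk: "pend E (Suc t) u' = k u' - (if u' = v0 then 1 else 0)" and kpos: "k v0 \<ge> 1" for u'
    proof -
      have e: "t < fst p \<longleftrightarrow> Suc t < fst p \<or> p = p0" if "p \<in> E" for p
        using uniq[OF that] p0 by (metis Suc_lessD Suc_lessI lessI)
      have s1: "{p\<in>E. snd p = u' \<and> t < fst p} = {p\<in>E. snd p = u' \<and> Suc t < fst p} \<union> (if u' = v0 then {p0} else {})"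
      proof (cases "u' = v0")
        case True then show ?thesis using e p0(1) unfolding v0_def by auto
      next
        case False then show ?thesis using e unfolding v0_def by auto
      qed
      have fin: "finite {p\<in>E. snd p = u' \<and> Suc t < fst p}" using fE by auto
      have nin: "p0 \<notin> {p\<in>E. snd p = u' \<and> Suc t < fst p}" using p0 by auto
      show "pend E (Suc t) u' = k u' - (if u' = v0 then 1 else 0)"
        unfolding pend_def k_def s1 using fin nin by (auto simp: card_insert_if)
      have "p0 \<in> {p\<in>E. snd p = v0 \<and> t < fst p}" using p0 v0_def by auto
      then show "k v0 \<ge> 1" unfolding k_def pend_def using fE
        by (metis (no_types, lifting) One_nat_def Suc_leI card_gt_0_iff empty_iff finite_subset mem_Collect_eq subsetI)
    qed
    have zero: "u \<in> {1..t} - {v0} \<Longrightarrow> w u * \<Psi> u = 0" for u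
      unfolding \<Psi>_def using Psi_form[OF iv t1 _ fE, of u] fireE[of u] by auto
    have "(\<Sum>u\<in>{1..t}. w u * \<Psi> u) = w v0 * \<Psi> v0 + (\<Sum>u\<in>{1..t}-{v0}. w u * \<Psi> u)"
      by (rule sum.remove) (use v0 in auto)
    also have "(\<Sum>u\<in>{1..t}-{v0}. w u * \<Psi> u) = 0" using zero by (intro sum.neutral) blast
    also have "w v0 * \<Psi> v0 = C0 * c1 * (w v0 * pochhammer (w v0 + 1) (k v0 - 1)) * (\<Prod>u'\<in>{1..t}-{v0}. pochhammer (w u') (k u'))"
    proof -
      have "(\<Prod>u'\<in>{1..t}. pochhammer (wt \<beta> hh t u' + (if u' = v0 then 1 else 0)) (pend E (Suc t) u'))
          = pochhammer (w v0 + 1) (k v0 - 1) * (\<Prod>u'\<in>{1..t}-{v0}. pochhammer (w u') (k u'))"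
        using prod_bump[of "{1..t}" v0 w "pend E (Suc t)", OF _ v0] kk unfolding w_def
        by (auto intro!: prod.cong)
      then show ?thesis unfolding \<Psi>_def Psi_form[OF iv t1 v0 fE] fireE C0_def c1_def by (simp add: algebra_simps)
    qed
    also have "w v0 * pochhammer (w v0 + 1) (k v0 - 1) = pochhammer (w v0) (k v0)"
      using kpos pochhammer_rec[of "w v0" "k v0 - 1"] by simp
    moreover have "P = pochhammer (w v0) (k v0) * (\<Prod>u'\<in>{1..t}-{v0}. pochhammer (w u') (k u'))"
      unfolding P_def by (rule prod_plain) (use v0 in auto)
    ultimately have "(\<Sum>u\<in>{1..t}. w u * \<Psi> u) = C0 * c1 * P"
      by (simp add: algebra_simps)
    then show ?thesis unfolding LHS FtP gfac_def c1_def using True by (simp add: algebra_simps)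
  qed
qed


lemma exp_Ft:
  assumes b: "\<beta> > 0" and gE: "good E" and t1: "t \<ge> 1"
  shows "measure_pmf.expectation (tree_proc \<beta> t) (Ft \<beta> E t) = init \<beta> E t * (\<Prod>s\<in>{1..<t}. gfac \<beta> E s)"
  using t1
proof (induction t rule: dec_induct)
  case base
  have ind: "indic E 1 (\<lambda>_. 0) = 1"
    unfolding indic_def using gE unfolding good_def by (intro prod.neutral) force
  have w1: "wt \<beta> (\<lambda>_. 0) 1 1 = \<beta>" unfolding wt_def cnt_def by simp
  show ?case unfolding tree_one[simplified] using ind w1 by (simp add: Ft_def init_def w0_def)
next
  case (step t)
  have t1: "t \<ge> 1" using step by simp
  define A where "A = set_pmf (tree_proc \<beta> t)"
  have fA: "finite A" unfolding A_def using finite_tree[OF b] .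
  have finC: "finite (set_pmf (choice_pmf \<beta> t))"
    using set_choice[OF b t1] Om_finite finite_subset by blast
  have "measure_pmf.expectation (tree_proc \<beta> (Suc t)) (Ft \<beta> E (Suc t))
      = (\<Sum>a\<in>A. pmf (tree_proc \<beta> t) a *\<^sub>R measure_pmf.expectation
           (map_pmf (\<lambda>f. a(Suc t := target a f)) (choice_pmf \<beta> t)) (Ft \<beta> E (Suc t)))"
    unfolding tree_Suc[OF t1] by (rule pmf_expectation_bind) (use fA finC in \<open>auto simp: A_def\<close>)
  also have "\<dots> = (\<Sum>a\<in>A. pmf (tree_proc \<beta> t) a * (gfac \<beta> E t * pochhammer (1 + \<beta>) (pend E (Suc t) (Suc t)) * Ft \<beta> E t a))"
  proof (rule sum.cong[OF refl])
    fix a assume "a \<in> A"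
    then have iv: "invt t a" using inv_tree[OF b] unfolding A_def by auto
    show "pmf (tree_proc \<beta> t) a *\<^sub>R measure_pmf.expectation
           (map_pmf (\<lambda>f. a(Suc t := target a f)) (choice_pmf \<beta> t)) (Ft \<beta> E (Suc t))
        = pmf (tree_proc \<beta> t) a * (gfac \<beta> E t * pochhammer (1 + \<beta>) (pend E (Suc t) (Suc t)) * Ft \<beta> E t a)"
      using step_inner[OF b t1 iv gE] by simp
  qed
  also have "\<dots> = gfac \<beta> E t * pochhammer (1 + \<beta>) (pend E (Suc t) (Suc t)) *
       (\<Sum>a\<in>A. pmf (tree_proc \<beta> t) a *\<^sub>R Ft \<beta> E t a)"
    by (simp add: sum_distrib_left algebra_simps)
  also have "(\<Sum>a\<in>A. pmf (tree_proc \<beta> t) a *\<^sub>R Ft \<beta> E t a) = measure_pmf.expectation (tree_proc \<beta> t) (Ft \<beta> E t)"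
    by (rule integral_measure_pmf[symmetric]) (use fA in \<open>auto simp: A_def\<close>)
  also have "\<dots> = init \<beta> E t * (\<Prod>s\<in>{1..<t}. gfac \<beta> E s)" using step.IH .
  also have "gfac \<beta> E t * pochhammer (1 + \<beta>) (pend E (Suc t) (Suc t)) * (init \<beta> E t * (\<Prod>s\<in>{1..<t}. gfac \<beta> E s))
      = init \<beta> E (Suc t) * (\<Prod>s\<in>{1..<Suc t}. gfac \<beta> E s)"
  proof -
    have "init \<beta> E (Suc t) = pochhammer (1 + \<beta>) (pend E (Suc t) (Suc t)) * init \<beta> E t"
      unfolding init_def using t1 by (simp add: atLeastAtMostSuc_conv w0_def)
    moreover have "(\<Prod>s\<in>{1..<Suc t}. gfac \<beta> E s) = gfac \<beta> E t * (\<Prod>s\<in>{1..<t}. gfac \<beta> E s)"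
      using t1 by (simp add: atLeastLessThanSuc)
    ultimately show ?thesis by simp
  qed
  finally show ?case .
qed


definition grp :: "nat \<Rightarrow> nat \<Rightarrow> nat set" where "grp m g = {(g-1)*m+1 .. g*m}"

lemma grp_finite[simp]: "finite (grp m g)" unfolding grp_def by simp
lemma card_grp: "g \<ge> 1 \<Longrightarrow> card (grp m g) = m"
  unfolding grp_def by (cases g) (auto simp: algebra_simps)

lemma merged_iff:
  assumes m: "m \<ge> 1" and i: "i \<ge> 1" and g: "g \<ge> 1"
  shows "merged m i = g \<longleftrightarrow> i \<in> grp m g"
proof
  assume "merged m i = g"
  then have q: "(i-1) div m = g - 1" unfolding merged_def using g by auto
  have "i - 1 = (i-1) div m * m + (i-1) mod m" by simp
  moreover have "(i-1) mod m < m" using m by simp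
  ultimately show "i \<in> grp m g" unfolding grp_def q using i g
    by (cases g) (auto simp: algebra_simps)
next
  assume "i \<in> grp m g"
  then have a: "(g-1)*m + 1 \<le> i" "i \<le> g*m" unfolding grp_def by auto
  have "(i-1) div m = g - 1"
  proof (rule div_nat_eqI)
    show "m * (g - 1) \<le> i - 1" using a by (simp add: algebra_simps)
    show "i - 1 < m * Suc (g - 1)" using a g m by (cases g) (auto simp: algebra_simps)
  qed
  then show "merged m i = g" unfolding merged_def using g by simp
qed

lemma merged_mono: "i \<le> j \<Longrightarrow> merged m i \<le> merged m j"
  unfolding merged_def by (simp add: div_le_mono)

lemma grp_ge: "g \<ge> 1 \<Longrightarrow> m \<ge> 1 \<Longrightarrow> u \<in> grp m g \<Longrightarrow> u \<ge> g"
proof -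
  assume "g \<ge> 1" "m \<ge> 1" "u \<in> grp m g"
  then have "(g-1)*m+1 \<le> u" unfolding grp_def by auto
  moreover have "g-1 \<le> (g-1)*m" using \<open>m \<ge> 1\<close> by simp
  ultimately show "u \<ge> g" using \<open>g \<ge> 1\<close> by linarith
qed

lemma grp_lt: "g < g' \<Longrightarrow> u \<in> grp m g \<Longrightarrow> u' \<in> grp m g' \<Longrightarrow> u < u'"
proof -
  assume "g < g'" "u \<in> grp m g" "u' \<in> grp m g'"
  then have "u \<le> g*m" "(g'-1)*m + 1 \<le> u'" "g \<le> g' - 1" unfolding grp_def by auto
  then have "g*m \<le> (g'-1)*m" by simp
  then show "u < u'" using \<open>u \<le> g*m\<close> \<open>(g'-1)*m + 1 \<le> u'\<close> by linarith
qed

lemma grp_disj: "g \<noteq> g' \<Longrightarrow> grp m g \<inter> grp m g' = {}"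
  using grp_lt by (metis disjoint_iff less_irrefl nat_neq_iff)

lemma joins_iff:
  assumes m: "m \<ge> 1" and iv: "invt N hh" and x: "x \<in> {2..N}" and ab: "1 \<le> p" "p < q"
  shows "joins m hh x p q \<longleftrightarrow> x \<in> grp m q \<and> hh x \<in> grp m p"
proof -
  have h: "1 \<le> hh x" "hh x < x" using iv x unfolding invt_def by auto
  have mono: "merged m (hh x) \<le> merged m x" using h by (simp add: merged_mono)
  have "joins m hh x p q \<longleftrightarrow> merged m x = q \<and> merged m (hh x) = p"
    unfolding joins_def using mono ab by auto
  also have "\<dots> \<longleftrightarrow> x \<in> grp m q \<and> hh x \<in> grp m p"
    using merged_iff[OF m] h x ab by auto
  finally show ?thesis .
qed

lemma grp_sub: "2 \<le> g \<Longrightarrow> g \<le> n \<Longrightarrow> m \<ge> 1 \<Longrightarrow> grp m g \<subseteq> {2..n*m}"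
proof
  fix u assume "2 \<le> g" "g \<le> n" "m \<ge> 1" "u \<in> grp m g"
  then have "(g-1)*m+1 \<le> u" "u \<le> g*m" unfolding grp_def by auto
  moreover have "(g-1)*m \<ge> 1" using \<open>2 \<le> g\<close> \<open>m \<ge> 1\<close> by simp
  moreover have "g*m \<le> n*m" using \<open>g \<le> n\<close> by simp
  ultimately have "2 \<le> u" "u \<le> n*m" by linarith+
  then show "u \<in> {2..n*m}" by auto
qed

definition ind :: "bool \<Rightarrow> real" where "ind P = (if P then 1 else 0)"

lemma triple_prod: "sum (f::nat\<Rightarrow>real) A * sum g B * sum h C = (\<Sum>i\<in>A. \<Sum>j\<in>B. \<Sum>l\<in>C. f i * g j * h l)"
proof -
  have "sum f A * sum g B * sum h C = (\<Sum>i\<in>A. \<Sum>j\<in>B. f i * g j) * sum h C" by (simp only: sum_product)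
  also have "\<dots> = (\<Sum>i\<in>A. \<Sum>j\<in>B. f i * g j * sum h C)" by (simp only: sum_distrib_right)
  also have "\<dots> = (\<Sum>i\<in>A. \<Sum>j\<in>B. \<Sum>l\<in>C. f i * g j * h l)" by (simp only: sum_distrib_left)
  finally show ?thesis .
qed

lemma triangles_sum:
  assumes m: "m \<ge> 1" and iv: "invt (n*m) hh" and abc: "1 \<le> a" "a < b" "b < c" "c \<le> n"
  shows "real (triangles m n hh a b c) =
    (\<Sum>x\<in>grp m b. \<Sum>y\<in>grp m c. \<Sum>z\<in>grp m c - {y}. \<Sum>i\<in>grp m a. \<Sum>j\<in>grp m b. \<Sum>l\<in>grp m a.
       ind (hh x = i) * ind (hh y = j) * ind (hh z = l))"
proof -
  define A where "A = grp m a"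
  define B where "B = grp m b"
  define C where "C = grp m c"
  have Bs: "B \<subseteq> {2..n*m}" unfolding B_def by (rule grp_sub) (use abc m in auto)
  have Cs: "C \<subseteq> {2..n*m}" unfolding C_def by (rule grp_sub) (use abc m in auto)
  let ?P = "\<lambda>(x,y,z). hh x \<in> A \<and> hh y \<in> B \<and> hh z \<in> A"
  have S: "{(x, y, z). x \<in> {2..n*m} \<and> y \<in> {2..n*m} \<and> z \<in> {2..n*m} \<and>
      joins m hh x a b \<and> joins m hh y b c \<and> joins m hh z a c} = {t\<in>B \<times> C \<times> C. ?P t}"
  proof -
    have "joins m hh x a b \<longleftrightarrow> x \<in> B \<and> hh x \<in> A" if "x \<in> {2..n*m}" for x
      unfolding A_def B_def using joins_iff[OF m iv that] abc by auto
    moreover have "joins m hh x b c \<longleftrightarrow> x \<in> C \<and> hh x \<in> B" if "x \<in> {2..n*m}" for x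
      unfolding C_def B_def using joins_iff[OF m iv that] abc by auto
    moreover have "joins m hh x a c \<longleftrightarrow> x \<in> C \<and> hh x \<in> A" if "x \<in> {2..n*m}" for x
      unfolding A_def C_def using joins_iff[OF m iv that] abc by auto
    ultimately show ?thesis using Bs Cs by auto
  qed
  have fin: "finite (B \<times> C \<times> C)" unfolding B_def C_def by simp
  have "real (triangles m n hh a b c) = (\<Sum>t\<in>{t\<in>B \<times> C \<times> C. ?P t}. 1)"
    unfolding triangles_def S by simp
  also have "\<dots> = (\<Sum>t\<in>B \<times> C \<times> C. if ?P t then 1 else 0)"
    by (rule sum.inter_filter[OF fin])
  also have "\<dots> = (\<Sum>x\<in>B. \<Sum>y\<in>C. \<Sum>z\<in>C. ind (hh x \<in> A) * ind (hh y \<in> B) * ind (hh z \<in> A))"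
    unfolding sum.cartesian_product by (rule sum.cong) (auto simp: ind_def split: if_splits)
  also have "\<dots> = (\<Sum>x\<in>B. \<Sum>y\<in>C. \<Sum>z\<in>C-{y}. ind (hh x \<in> A) * ind (hh y \<in> B) * ind (hh z \<in> A))"
  proof -
    have AB: "A \<inter> B = {}" unfolding A_def B_def by (rule grp_disj) (use abc in auto)
    have inner: "(\<Sum>z\<in>C. ind (hh x \<in> A) * ind (hh y \<in> B) * ind (hh z \<in> A))
        = (\<Sum>z\<in>C-{y}. ind (hh x \<in> A) * ind (hh y \<in> B) * ind (hh z \<in> A))" if y: "y \<in> C" for x y
    proof -
      have "ind (hh y \<in> B) * ind (hh y \<in> A) = 0" using AB by (auto simp: ind_def)
      then show ?thesis by (subst sum.remove[OF _ y]) (auto simp: C_def)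
    qed
    show ?thesis by (rule sum.cong[OF refl], rule sum.cong[OF refl], rule inner)
  qed
  also have "\<dots> = (\<Sum>x\<in>B. \<Sum>y\<in>C. \<Sum>z\<in>C-{y}. \<Sum>i\<in>A. \<Sum>j\<in>B. \<Sum>l\<in>A.
       ind (hh x = i) * ind (hh y = j) * ind (hh z = l))"
  proof -
    have d: "ind (hh u \<in> X) = (\<Sum>i\<in>X. ind (hh u = i))" if "finite X" for u X
      unfolding ind_def using that by (simp add: sum.delta)
    have dA: "ind (hh u \<in> A) = (\<Sum>i\<in>A. ind (hh u = i))" for u using d[of A] by (simp add: A_def)
    have dB: "ind (hh u \<in> B) = (\<Sum>i\<in>B. ind (hh u = i))" for u using d[of B] by (simp add: B_def)
    have pw: "ind (hh x \<in> A) * ind (hh y \<in> B) * ind (hh z \<in> A) = (\<Sum>i\<in>A. \<Sum>j\<in>B. \<Sum>l\<in>A.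
       ind (hh x = i) * ind (hh y = j) * ind (hh z = l))" for x y z
      unfolding dA[of x] dB[of y] dA[of z] by (rule triple_prod)
    show ?thesis unfolding pw ..
  qed
  finally show ?thesis unfolding A_def B_def C_def .
qed


definition E3 :: "nat \<Rightarrow> nat \<Rightarrow> nat \<Rightarrow> nat \<Rightarrow> nat \<Rightarrow> nat \<Rightarrow> (nat \<times> nat) set" where
  "E3 x i y j z l = {(x,i),(y,j),(z,l)}"

definition Pterm :: "real \<Rightarrow> nat \<Rightarrow> (nat \<times> nat) set \<Rightarrow> real" where
  "Pterm \<beta> N E = init \<beta> E N * (\<Prod>s\<in>{1..<N}. gfac \<beta> E s)"

locale tri =
  fixes m n a b c :: nat
  assumes m1: "m \<ge> 1" and a1: "1 \<le> a" and ab: "a < b" and bc: "b < c" and cn: "c \<le> n"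
begin

definition "A = grp m a"
definition "B = grp m b"
definition "C = grp m c"

lemma mem_facts:
  assumes "x \<in> B" "y \<in> C" "z \<in> C" "z \<noteq> y" "i \<in> A" "j \<in> B" "l \<in> A"
  shows "i < x" "j < y" "l < z" "x < y" "x < z" "1 \<le> i" "1 \<le> j" "1 \<le> l" "a \<le> i" "a \<le> j" "a \<le> l"
    "x \<le> n*m" "y \<le> n*m" "z \<le> n*m" "i \<noteq> j" "j \<noteq> l"
proof -
  show "i < x" using grp_lt[OF ab] assms unfolding A_def B_def by auto
  show "j < y" using grp_lt[OF bc] assms unfolding C_def B_def by auto
  show "l < z" using grp_lt[of a c] ab bc assms unfolding A_def C_def by auto
  show "x < y" using grp_lt[OF bc] assms unfolding C_def B_def by auto
  show "x < z" using grp_lt[OF bc] assms unfolding C_def B_def by auto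
  show ai: "a \<le> i" using grp_ge[OF a1 m1] assms unfolding A_def by auto
  show al: "a \<le> l" using grp_ge[OF a1 m1] assms unfolding A_def by auto
  show "a \<le> j" using grp_ge[of b m j] m1 ab assms unfolding B_def by auto
  then show "1 \<le> j" using a1 by simp
  show "1 \<le> i" using ai a1 by simp
  show "1 \<le> l" using al a1 by simp
  have "C \<subseteq> {2..n*m}" "B \<subseteq> {2..n*m}" unfolding C_def B_def
    by (rule grp_sub; use m1 ab bc cn a1 in auto)+
  then show "x \<le> n*m" "y \<le> n*m" "z \<le> n*m" using assms by auto
  show "i \<noteq> j" using grp_disj[of a b m] ab assms unfolding A_def B_def by auto
  show "j \<noteq> l" using grp_disj[of a b m] ab assms unfolding A_def B_def by auto
qed

lemma good_E3:
  assumes "x \<in> B" "y \<in> C" "z \<in> C" "z \<noteq> y" "i \<in> A" "j \<in> B" "l \<in> A"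
  shows "good (E3 x i y j z l)"
  using mem_facts[OF assms] assms(4) unfolding good_def E3_def by auto

lemma term_exp:
  assumes b: "\<beta> > 0" and mem: "x \<in> B" "y \<in> C" "z \<in> C" "z \<noteq> y" "i \<in> A" "j \<in> B" "l \<in> A"
  shows "measure_pmf.expectation (tree_proc \<beta> (n*m)) (\<lambda>hh. ind (hh x = i) * ind (hh y = j) * ind (hh z = l))
       = Pterm \<beta> (n*m) (E3 x i y j z l)"
proof -
  note f = mem_facts[OF mem]
  let ?E = "E3 x i y j z l"
  have N1: "n*m \<ge> 1" using f by linarith
  have pend0: "pend ?E (n*m) u = 0" for u
    unfolding pend_def E3_def using f by auto
  have ind: "indic ?E (n*m) hh = ind (hh x = i) * ind (hh y = j) * ind (hh z = l)" for hh
  proof -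
    have d1: "(x,i) \<notin> {(y,j),(z,l)}" "(y,j) \<notin> {(z,l)}" using f mem(4) by auto
    show ?thesis unfolding indic_def E3_def using f d1 by (simp add: ind_def)
  qed
  have "Ft \<beta> ?E (n*m) hh = ind (hh x = i) * ind (hh y = j) * ind (hh z = l)" for hh
    unfolding Ft_def ind pend0 by simp
  then have "(\<lambda>hh. ind (hh x = i) * ind (hh y = j) * ind (hh z = l)) = Ft \<beta> ?E (n*m)" by (simp add: fun_eq_iff)
  then have "measure_pmf.expectation (tree_proc \<beta> (n*m)) (\<lambda>hh. ind (hh x = i) * ind (hh y = j) * ind (hh z = l))
      = measure_pmf.expectation (tree_proc \<beta> (n*m)) (Ft \<beta> ?E (n*m))" by simp
  also have "\<dots> = Pterm \<beta> (n*m) ?E" unfolding Pterm_def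
    by (rule exp_Ft[OF b good_E3[OF mem] N1])
  finally show ?thesis .
qed

lemma expected_sum:
  assumes b: "\<beta> > 0"
  shows "expected_triangles \<beta> m n a b c =
    (\<Sum>x\<in>B. \<Sum>y\<in>C. \<Sum>z\<in>C - {y}. \<Sum>i\<in>A. \<Sum>j\<in>B. \<Sum>l\<in>A. Pterm \<beta> (n*m) (E3 x i y j z l))"
proof -
  let ?M = "tree_proc \<beta> (n*m)"
  have fin: "finite (set_pmf ?M)" by (rule finite_tree[OF b])
  have "expected_triangles \<beta> m n a b c = measure_pmf.expectation ?M
     (\<lambda>hh. \<Sum>x\<in>B. \<Sum>y\<in>C. \<Sum>z\<in>C - {y}. \<Sum>i\<in>A. \<Sum>j\<in>B. \<Sum>l\<in>A. ind (hh x = i) * ind (hh y = j) * ind (hh z = l))"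
    unfolding expected_triangles_def
  proof (rule integral_cong_AE)
    show "AE hh in measure_pmf ?M. real (triangles m n hh a b c) =
      (\<Sum>x\<in>B. \<Sum>y\<in>C. \<Sum>z\<in>C - {y}. \<Sum>i\<in>A. \<Sum>j\<in>B. \<Sum>l\<in>A. ind (hh x = i) * ind (hh y = j) * ind (hh z = l))"
      unfolding AE_measure_pmf_iff A_def B_def C_def
      using triangles_sum[OF m1 inv_tree[OF b] a1 ab bc cn] by blast
  qed auto
  also have "\<dots> = (\<Sum>x\<in>B. \<Sum>y\<in>C. \<Sum>z\<in>C - {y}. \<Sum>i\<in>A. \<Sum>j\<in>B. \<Sum>l\<in>A.
        measure_pmf.expectation ?M (\<lambda>hh. ind (hh x = i) * ind (hh y = j) * ind (hh z = l)))"
    by (simp add: integrable_measure_pmf_finite[OF fin] A_def B_def C_def)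
  also have "\<dots> = (\<Sum>x\<in>B. \<Sum>y\<in>C. \<Sum>z\<in>C - {y}. \<Sum>i\<in>A. \<Sum>j\<in>B. \<Sum>l\<in>A. Pterm \<beta> (n*m) (E3 x i y j z l))"
    using term_exp[OF b] by (intro sum.cong refl) auto
  finally show ?thesis .
qed

end

definition hf :: "real \<Rightarrow> nat \<times> nat \<Rightarrow> nat \<Rightarrow> real" where
  "hf \<beta> p s = (if Suc s = fst p then 1 / Dn \<beta> s else if snd p \<le> s \<and> Suc s < fst p then 1 + 1 / Dn \<beta> s else 1)"

definition sig :: "real \<Rightarrow> nat \<Rightarrow> nat \<Rightarrow> real" where
  "sig \<beta> v e = (\<Prod>s\<in>{v..<e-1}. 1 + 1 / Dn \<beta> s) / Dn \<beta> (e-1)"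

lemma prod_hf:
  assumes v: "1 \<le> v" "v < e" "e \<le> N"
  shows "(\<Prod>s\<in>{1..<N}. hf \<beta> (e,v) s) = sig \<beta> v e"
proof -
  have "(\<Prod>s\<in>{1..<N}. hf \<beta> (e,v) s) = (\<Prod>s\<in>{v..<e}. hf \<beta> (e,v) s)"
    by (rule prod.mono_neutral_right) (use v in \<open>auto simp: hf_def\<close>)
  also have "{v..<e} = insert (e-1) {v..<e-1}" using v by auto
  also have "(\<Prod>s\<in>insert (e-1) {v..<e-1}. hf \<beta> (e,v) s) = hf \<beta> (e,v) (e-1) * (\<Prod>s\<in>{v..<e-1}. hf \<beta> (e,v) s)"
    by (rule prod.insert) auto
  also have "hf \<beta> (e,v) (e-1) = 1 / Dn \<beta> (e-1)" using v by (simp add: hf_def)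
  also have "(\<Prod>s\<in>{v..<e-1}. hf \<beta> (e,v) s) = (\<Prod>s\<in>{v..<e-1}. 1 + 1 / Dn \<beta> s)"
    by (rule prod.cong) (auto simp: hf_def)
  finally show ?thesis unfolding sig_def by simp
qed

lemma Dn_ge_s: "\<beta> > 0 \<Longrightarrow> s \<ge> 1 \<Longrightarrow> Dn \<beta> s \<ge> \<beta> * real s"
  unfolding Dn_def by (simp add: algebra_simps)

lemma exp_le_aux: "(y::real) \<ge> 0 \<Longrightarrow> exp y \<le> (1 + y) * exp (y^2)"
proof -
  assume y: "y \<ge> 0"
  have "ln (1 / (1 + y)) \<le> 1 / (1 + y) - 1" by (rule ln_le_minus_one) (use y in auto)
  then have l: "ln (1 + y) \<ge> y / (1 + y)" using y by (simp add: ln_div field_simps)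
  have "y / (1 + y) \<ge> y - y^2"
  proof -
    have "(y - y^2) * (1 + y) = y - y^3" by (simp add: algebra_simps power2_eq_square power3_eq_cube)
    also have "\<dots> \<le> y" using y by simp
    finally show ?thesis using y by (simp add: field_simps)
  qed
  then have "ln (1 + y) + y^2 \<ge> y" using l by linarith
  then have "exp y \<le> exp (ln (1 + y) + y^2)" by simp
  also have "\<dots> = (1 + y) * exp (y^2)" using y by (simp add: exp_add)
  finally show ?thesis .
qed

lemma pow_exp: "(x::real) \<ge> 0 \<Longrightarrow> (1 + x) ^ k \<le> exp (real k * x)"
proof -
  assume x: "x \<ge> 0"
  have "(1 + x) ^ k \<le> exp x ^ k" by (rule power_mono) (use x exp_ge_add_one_self in auto)
  also have "\<dots> = exp (real k * x)" by (simp add: exp_of_nat_mult)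
  finally show ?thesis .
qed

definition err :: "real \<Rightarrow> (nat \<times> nat) set \<Rightarrow> nat \<Rightarrow> nat \<Rightarrow> real" where
  "err \<beta> E a s = (if a \<le> s then 9 / (\<beta>^2 * real s ^ 2) + (if fires E s then 3 / (\<beta> * real s) else 0) else 0)"

lemma hfac_form:
  assumes gE: "good E" and s: "s \<ge> 1"
  shows "(\<Prod>p\<in>E. hf \<beta> p s) = (if fires E s then 1 / Dn \<beta> s else 1) * (1 + 1 / Dn \<beta> s) ^ card {p\<in>E. snd p \<le> s \<and> Suc s < fst p}"
    and "real (\<Sum>u\<in>{1..s}. pend E s u) = (if fires E s then 1 else 0) + real (card {p\<in>E. snd p \<le> s \<and> Suc s < fst p})"
proof -
  have fE: "finite E" using gE unfolding good_def by auto
  define Fi where "Fi = {p\<in>E. Suc s = fst p}"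
  define Pb where "Pb = {p\<in>E. snd p \<le> s \<and> Suc s < fst p}"
  have fFi: "finite Fi" "finite Pb" using fE unfolding Fi_def Pb_def by auto
  have disj: "Fi \<inter> Pb = {}" unfolding Fi_def Pb_def by auto
  have cFi: "card Fi = (if fires E s then 1 else 0)"
  proof (cases "fires E s")
    case True
    then obtain p0 where p0: "p0 \<in> E" "fst p0 = Suc s" unfolding fires_def by auto
    have "Fi = {p0}" using p0 gE unfolding Fi_def good_def by auto
    then show ?thesis using True by simp
  next
    case False then have "Fi = {}" unfolding Fi_def fires_def by auto
    then show ?thesis using False by simp
  qed
  have "(\<Prod>p\<in>E. hf \<beta> p s) = (\<Prod>p\<in>Fi \<union> Pb. hf \<beta> p s)"
    by (rule prod.mono_neutral_right) (auto simp: fE Fi_def Pb_def hf_def)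
  also have "\<dots> = (\<Prod>p\<in>Fi. hf \<beta> p s) * (\<Prod>p\<in>Pb. hf \<beta> p s)"
    by (rule prod.union_disjoint) (use fFi disj in auto)
  also have "(\<Prod>p\<in>Fi. hf \<beta> p s) = (1 / Dn \<beta> s) ^ card Fi"
    by (subst prod.cong[where h="\<lambda>_. 1 / Dn \<beta> s"]) (auto simp: Fi_def hf_def)
  also have "(\<Prod>p\<in>Pb. hf \<beta> p s) = (1 + 1 / Dn \<beta> s) ^ card Pb"
    by (subst prod.cong[where h="\<lambda>_. 1 + 1 / Dn \<beta> s"]) (auto simp: Pb_def hf_def)
  finally show "(\<Prod>p\<in>E. hf \<beta> p s) = (if fires E s then 1 / Dn \<beta> s else 1) * (1 + 1 / Dn \<beta> s) ^ card {p\<in>E. snd p \<le> s \<and> Suc s < fst p}"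
    unfolding cFi Pb_def by simp
  define S where "S = {p\<in>E. snd p \<le> s \<and> s < fst p}"
  have fS: "finite S" using fE unfolding S_def by auto
  have "(\<Sum>u\<in>{1..s}. pend E s u) = (\<Sum>u\<in>{1..s}. card {p\<in>S. snd p = u})"
    by (rule sum.cong) (auto simp: pend_def S_def intro!: arg_cong[where f=card])
  also have "\<dots> = (\<Sum>u\<in>{1..s}. \<Sum>p\<in>{p\<in>S. snd p = u}. 1)" by simp
  also have "\<dots> = (\<Sum>p\<in>S. 1)"
    by (rule sum.group) (use fS gE in \<open>auto simp: S_def good_def\<close>)
  also have "S = Fi \<union> Pb"
    unfolding S_def Fi_def Pb_def using gE unfolding good_def by (auto simp: Suc_lessI less_Suc_eq_le)
  also have "(\<Sum>p\<in>Fi \<union> Pb. 1) = card Fi + card Pb"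
    using card_Un_disjoint[OF fFi disj] by simp
  finally show "real (\<Sum>u\<in>{1..s}. pend E s u) = (if fires E s then 1 else 0) + real (card {p\<in>E. snd p \<le> s \<and> Suc s < fst p})"
    unfolding cFi Pb_def by simp
qed

lemma gfac_hfac:
  assumes b: "\<beta> > 0" and gE: "good E" and cE: "card E \<le> 3" and aE: "\<forall>p\<in>E. a \<le> snd p" and s: "s \<ge> 1"
  shows "gfac \<beta> E s \<le> (\<Prod>p\<in>E. hf \<beta> p s)" "(\<Prod>p\<in>E. hf \<beta> p s) \<le> gfac \<beta> E s * exp (err \<beta> E a s)"
    "gfac \<beta> E s > 0"
proof -
  note hf = hfac_form[OF gE s]
  define P where "P = card {p\<in>E. snd p \<le> s \<and> Suc s < fst p}"
  define D where "D = Dn \<beta> s"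
  have D: "D > 0" "D \<ge> \<beta> * real s" unfolding D_def using Dn_pos[OF b s] Dn_ge_s[OF b s] by auto
  have fE: "finite E" using gE unfolding good_def by auto
  have P3: "P \<le> 3" unfolding P_def using card_mono[OF fE, of "{p\<in>E. snd p \<le> s \<and> Suc s < fst p}"] cE by auto
  have Pa: "P > 0 \<Longrightarrow> a \<le> s"
  proof -
    assume "P > 0"
    then obtain p where "p \<in> E" "snd p \<le> s" unfolding P_def by (metis (no_types, lifting) card_gt_0_iff empty_Collect_eq)
    then show "a \<le> s" using aE by force
  qed
  have x0: "1 / D \<ge> 0" using D by simp
  have err0: "err \<beta> E a s \<ge> 0" unfolding err_def using b by auto
  have bnd: "real P / D \<le> 3 / (\<beta> * real s)"
  proof -
    have "real P / D \<le> 3 / D" using P3 D by (simp add: divide_right_mono)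
    also have "\<dots> \<le> 3 / (\<beta> * real s)" using D b s by (intro divide_left_mono) auto
    finally show ?thesis .
  qed
  have bnd2: "(real P / D)^2 \<le> 9 / (\<beta>^2 * real s^2)"
  proof -
    have "(real P / D)^2 \<le> (3 / (\<beta> * real s))^2" using bnd by (intro power_mono) (use D in auto)
    then show ?thesis by (simp add: power_divide power_mult_distrib)
  qed
  have gf: "gfac \<beta> E s = (if fires E s then 1 / D else 1 + real P / D)"
    unfolding gfac_def D_def P_def using hf(2) by simp
  show "gfac \<beta> E s > 0" unfolding gf using D by (auto intro: add_pos_nonneg)
  show "gfac \<beta> E s \<le> (\<Prod>p\<in>E. hf \<beta> p s)"
  proof (cases "fires E s")
    case True
    have "1 \<le> (1 + 1/D) ^ P" using x0 by simp
    then have "1/D \<le> (1 + 1/D) ^ P / D" using D by (simp add: divide_right_mono)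
    then show ?thesis unfolding gf hf(1) D_def[symmetric] P_def[symmetric] using True D
      by simp
  next
    case False
    have "1 + real P * (1/D) \<le> (1 + 1/D) ^ P" by (rule Bernoulli_inequality) (use x0 in linarith)
    then show ?thesis unfolding gf hf(1) D_def[symmetric] P_def[symmetric] using False by simp
  qed
  show "(\<Prod>p\<in>E. hf \<beta> p s) \<le> gfac \<beta> E s * exp (err \<beta> E a s)"
  proof (cases "P = 0")
    case True
    have e1: "1 \<le> exp (err \<beta> E a s)" using err0 by simp
    then have "1/D \<le> exp (err \<beta> E a s) / D" using D by (simp add: divide_right_mono)
    then show ?thesis unfolding gf hf(1) D_def[symmetric] P_def[symmetric] using D e1 True
      by auto
  next
    case False
    then have as: "a \<le> s" using Pa by auto
    have pe: "(1 + 1/D)^P \<le> exp (real P / D)" using pow_exp[OF x0, of P] by simp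
    show ?thesis
    proof (cases "fires E s")
      case True
      have e: "real P / D \<le> err \<beta> E a s" unfolding err_def using as True bnd b s
        by (auto intro: add_increasing)
      have "(1 + 1/D)^P \<le> exp (err \<beta> E a s)" using pe e by (meson exp_le_cancel_iff order_trans)
      then show ?thesis unfolding gf hf(1) D_def[symmetric] P_def[symmetric] using True D
        by (simp add: divide_right_mono)
    next
      case nf: False
      have e: "(real P / D)^2 \<le> err \<beta> E a s" unfolding err_def using as nf bnd2 by auto
      have "(1 + 1/D)^P \<le> (1 + real P / D) * exp ((real P / D)^2)"
        using pe exp_le_aux[of "real P / D"] D by (meson divide_nonneg_pos of_nat_0_le_iff order_trans)
      also have "\<dots> \<le> (1 + real P / D) * exp (err \<beta> E a s)"
        using e D by (intro mult_left_mono) auto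
      finally show ?thesis unfolding gf hf(1) D_def[symmetric] P_def[symmetric] using nf by simp
    qed
  qed
qed


lemma sum_inv_sq: assumes "1 \<le> v" "v \<le> e"
  shows "(\<Sum>s\<in>{v..<e}. 1 / real s ^ 2) \<le> 2 / real v - 2 / real e"
  using assms(2)
proof (induction e rule: dec_induct)
  case base then show ?case by simp
next
  case (step e)
  have e1: "real e \<ge> 1" using step assms by simp
  have "1 / real e ^ 2 \<le> 2 / real e - 2 / real (Suc e)"
  proof -
    have "2 / real e - 2 / real (Suc e) = 2 / (real e * (real e + 1))" using e1 by (simp add: field_simps)
    also have "\<dots> \<ge> 1 / real e ^ 2"
    proof -
      have "real e * (real e + 1) \<le> 2 * real e ^ 2" using e1 by (simp add: power2_eq_square algebra_simps)
      then have "2 / (2 * real e ^ 2) \<le> 2 / (real e * (real e + 1))" using e1 by (intro frac_le) auto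
      then show ?thesis by simp
    qed
    finally show ?thesis .
  qed
  then show ?case using step by simp
qed

lemma sum_inv_sq': assumes "1 \<le> v" shows "(\<Sum>s\<in>{v..<e}. 1 / real s ^ 2) \<le> 2 / real v"
proof (cases "v \<le> e")
  case True then show ?thesis using sum_inv_sq[OF assms True] by (smt (verit) divide_nonneg_nonneg of_nat_0_le_iff)
next
  case False then show ?thesis by simp
qed

lemma card_fires: assumes "finite E" shows "card {s\<in>S. fires E s} \<le> card E"
proof -
  have "{s\<in>S. fires E s} \<subseteq> (\<lambda>p. fst p - 1) ` E" unfolding fires_def by force
  then have "card {s\<in>S. fires E s} \<le> card ((\<lambda>p. fst p - 1) ` E)" by (rule card_mono[OF finite_imageI[OF assms]])
  also have "\<dots> \<le> card E" by (rule card_image_le[OF assms])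
  finally show ?thesis .
qed

lemma sum_err:
  assumes b: "\<beta> > 0" and gE: "good E" and cE: "card E \<le> 3" and a: "a \<ge> 1"
  shows "(\<Sum>s\<in>{1..<N}. err \<beta> E a s) \<le> (18 / \<beta>^2 + 9 / \<beta>) / real a"
proof -
  have fE: "finite E" using gE unfolding good_def by auto
  have split: "err \<beta> E a s = (if a \<le> s then 9 / \<beta>^2 * (1 / real s^2) else 0) + (if fires E s \<and> a \<le> s then 3 / (\<beta> * real s) else 0)"
    if "s \<in> {1..<N}" for s using that unfolding err_def by auto
  have s1: "(\<Sum>s\<in>{1..<N}. (if a \<le> s then 9 / \<beta>^2 * (1 / real s^2) else 0)) \<le> 18 / \<beta>^2 / real a"
  proof -
    have "(\<Sum>s\<in>{1..<N}. (if a \<le> s then 9 / \<beta>^2 * (1 / real s^2) else 0)) = (\<Sum>s\<in>{s\<in>{1..<N}. a \<le> s}. 9 / \<beta>^2 * (1 / real s^2))"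
      by (rule sum.inter_filter[symmetric]) auto
    also have "{s\<in>{1..<N}. a \<le> s} = {a..<N}" using a by auto
    also have "(\<Sum>s\<in>{a..<N}. 9 / \<beta>^2 * (1 / real s^2)) = 9 / \<beta>^2 * (\<Sum>s\<in>{a..<N}. 1 / real s^2)"
      by (simp add: sum_distrib_left)
    also have "\<dots> \<le> 9 / \<beta>^2 * (2 / real a)" using sum_inv_sq'[OF a] b by (intro mult_left_mono) auto
    finally show ?thesis by simp
  qed
  have s2: "(\<Sum>s\<in>{1..<N}. (if fires E s \<and> a \<le> s then 3 / (\<beta> * real s) else 0)) \<le> 9 / \<beta> / real a"
  proof -
    have "(\<Sum>s\<in>{1..<N}. (if fires E s \<and> a \<le> s then 3 / (\<beta> * real s) else 0))
        \<le> (\<Sum>s\<in>{1..<N}. (if fires E s then 3 / (\<beta> * real a) else 0))"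
    proof (rule sum_mono)
      fix s assume "s \<in> {1..<N}"
      show "(if fires E s \<and> a \<le> s then 3 / (\<beta> * real s) else 0) \<le> (if fires E s then 3 / (\<beta> * real a) else 0)"
        using b a by (auto simp: frac_le)
    qed
    also have "\<dots> = (\<Sum>s\<in>{s\<in>{1..<N}. fires E s}. 3 / (\<beta> * real a))"
      by (rule sum.inter_filter[symmetric]) auto
    also have "\<dots> = real (card {s\<in>{1..<N}. fires E s}) * (3 / (\<beta> * real a))" by simp
    also have "\<dots> \<le> 3 * (3 / (\<beta> * real a))"
      using card_fires[OF fE, of "{1..<N}"] cE b a by (intro mult_right_mono) auto
    finally show ?thesis by simp
  qed
  have "(\<Sum>s\<in>{1..<N}. err \<beta> E a s) = (\<Sum>s\<in>{1..<N}. (if a \<le> s then 9 / \<beta>^2 * (1 / real s^2) else 0))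
     + (\<Sum>s\<in>{1..<N}. (if fires E s \<and> a \<le> s then 3 / (\<beta> * real s) else 0))"
    unfolding sum.distrib[symmetric] by (rule sum.cong[OF refl split])
  also have "\<dots> \<le> 18 / \<beta>^2 / real a + 9 / \<beta> / real a" using s1 s2 by linarith
  finally show ?thesis by (simp add: add_divide_distrib)
qed

lemma prod_compare:
  assumes b: "\<beta> > 0" and gE: "good E" and cE: "card E \<le> 3" and a: "a \<ge> 1"
    and aE: "\<forall>p\<in>E. a \<le> snd p" and NE: "\<forall>p\<in>E. fst p \<le> N"
  shows "(\<Prod>s\<in>{1..<N}. gfac \<beta> E s) \<le> (\<Prod>p\<in>E. sig \<beta> (snd p) (fst p))"
    "(\<Prod>p\<in>E. sig \<beta> (snd p) (fst p)) \<le> (\<Prod>s\<in>{1..<N}. gfac \<beta> E s) * exp ((18 / \<beta>^2 + 9 / \<beta>) / real a)"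
proof -
  have swap: "(\<Prod>s\<in>{1..<N}. \<Prod>p\<in>E. hf \<beta> p s) = (\<Prod>p\<in>E. sig \<beta> (snd p) (fst p))"
  proof -
    have "(\<Prod>s\<in>{1..<N}. \<Prod>p\<in>E. hf \<beta> p s) = (\<Prod>p\<in>E. \<Prod>s\<in>{1..<N}. hf \<beta> p s)" by (rule prod.swap)
    also have "\<dots> = (\<Prod>p\<in>E. sig \<beta> (snd p) (fst p))"
    proof (rule prod.cong[OF refl])
      fix p assume p: "p \<in> E"
      obtain e v where ev: "p = (e,v)" by force
      have "1 \<le> v" "v < e" "e \<le> N" using p gE NE unfolding good_def ev by force+
      then show "(\<Prod>s\<in>{1..<N}. hf \<beta> p s) = sig \<beta> (snd p) (fst p)"
        unfolding ev using prod_hf[of v e N \<beta>] by simp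
    qed
    finally show ?thesis .
  qed
  note gh = gfac_hfac[OF b gE cE aE]
  show "(\<Prod>s\<in>{1..<N}. gfac \<beta> E s) \<le> (\<Prod>p\<in>E. sig \<beta> (snd p) (fst p))"
    unfolding swap[symmetric] by (rule prod_mono) (use gh in \<open>auto simp: less_imp_le\<close>)
  have "(\<Prod>s\<in>{1..<N}. \<Prod>p\<in>E. hf \<beta> p s) \<le> (\<Prod>s\<in>{1..<N}. gfac \<beta> E s * exp (err \<beta> E a s))"
  proof (rule prod_mono)
    fix s assume "s \<in> {1..<N}"
    then have s: "s \<ge> 1" by simp
    show "0 \<le> (\<Prod>p\<in>E. hf \<beta> p s) \<and> (\<Prod>p\<in>E. hf \<beta> p s) \<le> gfac \<beta> E s * exp (err \<beta> E a s)"
      using gh[OF s] by (meson less_imp_le order_trans)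
  qed
  also have "\<dots> = (\<Prod>s\<in>{1..<N}. gfac \<beta> E s) * exp (\<Sum>s\<in>{1..<N}. err \<beta> E a s)"
    by (simp add: prod.distrib exp_sum)
  also have "\<dots> \<le> (\<Prod>s\<in>{1..<N}. gfac \<beta> E s) * exp ((18 / \<beta>^2 + 9 / \<beta>) / real a)"
    using sum_err[OF b gE cE a, of N] gh(3) by (intro mult_left_mono prod_nonneg) (auto simp: less_imp_le)
  finally show "(\<Prod>p\<in>E. sig \<beta> (snd p) (fst p)) \<le> (\<Prod>s\<in>{1..<N}. gfac \<beta> E s) * exp ((18 / \<beta>^2 + 9 / \<beta>) / real a)"
    unfolding swap .
qed


definition tau :: "real \<Rightarrow> nat \<Rightarrow> nat \<Rightarrow> real" where
  "tau \<beta> v e = (real e / real v) powr (1 / (2 + \<beta>)) / ((2 + \<beta>) * real e)"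

lemma ln_lower: "(x::real) \<ge> 0 \<Longrightarrow> ln (1 + x) \<ge> x - x^2"
proof -
  assume y: "x \<ge> 0"
  have "ln (1 / (1 + x)) \<le> 1 / (1 + x) - 1" by (rule ln_le_minus_one) (use y in auto)
  then have l: "ln (1 + x) \<ge> x / (1 + x)" using y by (simp add: ln_div field_simps)
  have "x / (1 + x) \<ge> x - x^2"
  proof -
    have "(x - x^2) * (1 + x) = x - x^3" by (simp add: algebra_simps power2_eq_square power3_eq_cube)
    also have "\<dots> \<le> x" using y by simp
    finally show ?thesis using y by (simp add: field_simps)
  qed
  then show ?thesis using l by linarith
qed

definition K0 :: "real \<Rightarrow> real" where "K0 \<beta> = 1 / \<beta>^2 + 1 / \<beta> + 1"

lemma term_est:
  assumes b: "\<beta> > 0" and s: "s \<ge> 1"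
  shows "\<bar>ln (1 + 1 / Dn \<beta> s) - (1 / (2 + \<beta>)) * ln (1 + 1 / real s)\<bar> \<le> K0 \<beta> / real s ^ 2"
proof -
  define D where "D = Dn \<beta> s"
  define g where "g = 1 / (2 + \<beta>)"
  have s1: "real s \<ge> 1" using s by simp
  have D: "D > 0" "D \<ge> \<beta> * real s" unfolding D_def using Dn_pos[OF b s] Dn_ge_s[OF b s] by auto
  have g: "g > 0" "g \<le> 1" unfolding g_def using b by auto
  have diff: "1 / D - g / real s = 2 * g / (real s * D)"
  proof -
    have "D = (2 + \<beta>) * real s - 2" unfolding D_def Dn_def by simp
    then show ?thesis unfolding g_def using D s1 b by (simp add: field_simps)
  qed
  have diff2: "2 * g / (real s * D) \<le> 1 / (\<beta> * real s ^ 2)"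
  proof -
    have "2 * g \<le> 1" unfolding g_def using b by (simp add: field_simps)
    moreover have "\<beta> * real s ^ 2 \<le> real s * D" using D s1 by (simp add: power2_eq_square algebra_simps mult_left_mono)
    ultimately show ?thesis using D s1 b by (intro frac_le) auto
  qed
  have x: "1 / D \<le> 1 / (\<beta> * real s)" using D b s1 by (intro frac_le) auto
  have xsq: "(1 / D)^2 \<le> 1 / (\<beta>^2 * real s ^ 2)"
  proof -
    have "(1/D)^2 \<le> (1 / (\<beta> * real s))^2" using x D by (intro power_mono) auto
    then show ?thesis by (simp add: power_mult_distrib power_divide)
  qed
  have u1: "ln (1 + 1/D) \<le> 1/D" by (rule ln_add_one_self_le_self) (use D in auto)
  have l1: "ln (1 + 1/D) \<ge> 1/D - (1/D)^2" by (rule ln_lower) (use D in auto)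
  have u2: "ln (1 + 1 / real s) \<le> 1 / real s" by (rule ln_add_one_self_le_self) auto
  have l2: "ln (1 + 1 / real s) \<ge> 1 / real s - (1 / real s)^2" by (rule ln_lower) auto
  have gu2: "g * ln (1 + 1 / real s) \<le> g / real s" using mult_left_mono[OF u2, of g] g by simp
  have gl2: "g * ln (1 + 1 / real s) \<ge> g / real s - g * (1 / real s)^2"
    using mult_left_mono[OF l2, of g] g by (simp add: algebra_simps)
  have gsq: "g * (1 / real s)^2 \<le> 1 / real s ^ 2"
  proof -
    have "g * (1 / real s)^2 = g / real s ^ 2" by (simp add: power_divide)
    also have "\<dots> \<le> 1 / real s ^ 2" using g by (intro divide_right_mono) auto
    finally show ?thesis .
  qed
  have up: "ln (1 + 1/D) - g * ln (1 + 1 / real s) \<le> 1 / (\<beta> * real s ^ 2) + 1 / real s ^ 2"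
    using u1 gl2 diff diff2 gsq by linarith
  have lo: "ln (1 + 1/D) - g * ln (1 + 1 / real s) \<ge> - (1 / (\<beta>^2 * real s ^ 2))"
  proof -
    have "2 * g / (real s * D) \<ge> 0" using g D s1 by simp
    then show ?thesis using l1 gu2 diff xsq by linarith
  qed
  have "1 / (\<beta> * real s ^ 2) + 1 / real s ^ 2 \<le> K0 \<beta> / real s ^ 2"
    unfolding K0_def using b s1 by (simp add: field_simps)
  moreover have "1 / (\<beta>^2 * real s ^ 2) \<le> K0 \<beta> / real s ^ 2"
    unfolding K0_def using b s1 by (simp add: field_simps)
  ultimately show ?thesis using up lo unfolding D_def g_def by (simp add: abs_le_iff)
qed

lemma sum_ln_tel: assumes "1 \<le> v" "v \<le> e"
  shows "(\<Sum>s\<in>{v..<e}. ln (1 + 1 / real s)) = ln (real e) - ln (real v)"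
  using assms(2)
proof (induction e rule: dec_induct)
  case base then show ?case by simp
next
  case (step e)
  have e1: "real e \<ge> 1" using step assms by simp
  have "ln (1 + 1 / real e) = ln (real (Suc e)) - ln (real e)"
  proof -
    have "1 + 1 / real e = real (Suc e) / real e" using e1 by (simp add: field_simps)
    then show ?thesis using e1 by (simp add: ln_div)
  qed
  then show ?case using step by simp
qed

definition K4 :: "real \<Rightarrow> real" where "K4 \<beta> = 2 * K0 \<beta> + 2 * (3 + \<beta>) / (1 + \<beta>)"

lemma sig_pos: "\<beta> > 0 \<Longrightarrow> 1 \<le> v \<Longrightarrow> v < e \<Longrightarrow> sig \<beta> v e > 0"
  unfolding sig_def using Dn_pos[of \<beta>]
  by (intro divide_pos_pos prod_pos) (auto intro: add_pos_pos)

lemma tau_pos: "\<beta> > 0 \<Longrightarrow> 1 \<le> v \<Longrightarrow> 1 \<le> e \<Longrightarrow> tau \<beta> v e > 0"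
  unfolding tau_def by (intro divide_pos_pos) auto

lemma ln_sig_tau:
  assumes b: "\<beta> > 0" and v: "1 \<le> v" "v < e"
  shows "\<bar>ln (sig \<beta> v e) - ln (tau \<beta> v e)\<bar> \<le> K4 \<beta> / real v"
proof -
  define g where "g = 1 / (2 + \<beta>)"
  have v1: "real v \<ge> 1" "real e \<ge> 2" using v by auto
  have Dp: "s \<ge> 1 \<Longrightarrow> Dn \<beta> s > 0" for s using Dn_pos[OF b] by auto
  have e1: "e - 1 \<ge> 1" using v by simp
  have lsig: "ln (sig \<beta> v e) = (\<Sum>s\<in>{v..<e-1}. ln (1 + 1 / Dn \<beta> s)) - ln (Dn \<beta> (e-1))"
  proof -
    have pos: "1 + 1 / Dn \<beta> s > 0" if "s \<in> {v..<e-1}" for s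
    proof -
      have "s \<ge> 1" using that v by auto
      then show ?thesis using Dp[of s] by (simp add: add_pos_pos)
    qed
    have "ln (\<Prod>s\<in>{v..<e-1}. 1 + 1 / Dn \<beta> s) = (\<Sum>s\<in>{v..<e-1}. ln (1 + 1 / Dn \<beta> s))"
      by (rule ln_prod) (use pos in force)+
    moreover have pp: "(\<Prod>s\<in>{v..<e-1}. 1 + 1 / Dn \<beta> s) > 0"
      by (rule prod_pos) (use pos in auto)
    moreover have "ln ((\<Prod>s\<in>{v..<e-1}. 1 + 1 / Dn \<beta> s) / Dn \<beta> (e-1)) = ln (\<Prod>s\<in>{v..<e-1}. 1 + 1 / Dn \<beta> s) - ln (Dn \<beta> (e-1))"
      using ln_divide_pos[OF pp Dp[OF e1]] .
    ultimately show ?thesis unfolding sig_def by simp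
  qed
  have split: "(\<Sum>s\<in>{v..<e}. ln (1 + 1 / Dn \<beta> s)) = (\<Sum>s\<in>{v..<e-1}. ln (1 + 1 / Dn \<beta> s)) + ln (1 + 1 / Dn \<beta> (e-1))"
  proof -
    have "{v..<e} = insert (e-1) {v..<e-1}" using v by auto
    then show ?thesis by (simp add: algebra_simps)
  qed
  have lD: "ln (1 + 1 / Dn \<beta> (e-1)) + ln (Dn \<beta> (e-1)) = ln (Dn \<beta> (e-1) + 1)"
  proof -
    have "(1 + 1 / Dn \<beta> (e-1)) * Dn \<beta> (e-1) = Dn \<beta> (e-1) + 1" using Dp[OF e1] by (simp add: field_simps)
    then show ?thesis using Dp[OF e1] by (metis ln_mult add_pos_pos zero_less_one divide_pos_pos less_numeral_extra(3))
  qed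
  have ltau: "ln (tau \<beta> v e) = g * (ln (real e) - ln (real v)) - ln ((2 + \<beta>) * real e)"
    unfolding tau_def g_def using v1 b by (simp add: ln_div)
  have S: "\<bar>(\<Sum>s\<in>{v..<e}. ln (1 + 1 / Dn \<beta> s)) - g * (ln (real e) - ln (real v))\<bar> \<le> 2 * K0 \<beta> / real v"
  proof -
    have "(\<Sum>s\<in>{v..<e}. ln (1 + 1 / Dn \<beta> s)) - g * (ln (real e) - ln (real v))
        = (\<Sum>s\<in>{v..<e}. ln (1 + 1 / Dn \<beta> s) - g * ln (1 + 1 / real s))"
      unfolding sum_ln_tel[OF v(1) less_imp_le[OF v(2)], symmetric] sum_subtractf sum_distrib_left ..
    also have "\<bar>\<dots>\<bar> \<le> (\<Sum>s\<in>{v..<e}. \<bar>ln (1 + 1 / Dn \<beta> s) - g * ln (1 + 1 / real s)\<bar>)" by (rule sum_abs)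
    also have "\<dots> \<le> (\<Sum>s\<in>{v..<e}. K0 \<beta> * (1 / real s ^ 2))"
      by (rule sum_mono) (use term_est[OF b] v in \<open>auto simp: g_def\<close>)
    also have "\<dots> = K0 \<beta> * (\<Sum>s\<in>{v..<e}. 1 / real s ^ 2)" by (simp add: sum_distrib_left)
    also have "\<dots> \<le> K0 \<beta> * (2 / real v)"
      by (rule mult_left_mono) (use sum_inv_sq'[OF v(1)] b in \<open>auto simp: K0_def\<close>)
    finally show ?thesis by (simp add: mult.commute)
  qed
  have R: "0 \<le> ln ((2 + \<beta>) * real e) - ln (Dn \<beta> (e-1) + 1)" "ln ((2 + \<beta>) * real e) - ln (Dn \<beta> (e-1) + 1) \<le> 2 * (3 + \<beta>) / ((1 + \<beta>) * real v)"
  proof -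
    define r where "r = Dn \<beta> (e-1) + 1"
    have r: "r = (2 + \<beta>) * real e - (3 + \<beta>)" unfolding r_def Dn_def using v by (simp add: of_nat_diff algebra_simps)
    have be: "\<beta> * real e \<ge> 2 * \<beta>" using v1 b by simp
    have ex: "(1 + \<beta>) * real e / 2 = real e / 2 + \<beta> * real e / 2" "(2 + \<beta>) * real e = 2 * real e + \<beta> * real e"
      by (simp_all add: algebra_simps)
    have rlow: "r \<ge> (1 + \<beta>) * real e / 2" unfolding r ex using v1 b be by linarith
    have rpos: "r > 0" using rlow v1 b by (smt (verit) divide_pos_pos mult_pos_pos)
    have q: "(2 + \<beta>) * real e > 0" using b v1 by simp
    show "0 \<le> ln ((2 + \<beta>) * real e) - ln (Dn \<beta> (e-1) + 1)" unfolding r_def[symmetric]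
      using rpos q r b by (simp add: ln_le_cancel_iff)
    have "ln ((2 + \<beta>) * real e) - ln r = ln ((2 + \<beta>) * real e / r)" using ln_divide_pos[OF q rpos] by simp
    also have "\<dots> \<le> (2 + \<beta>) * real e / r - 1" by (rule ln_le_minus_one) (use rpos q in simp)
    also have "\<dots> = (3 + \<beta>) / r" using rpos unfolding r by (simp add: field_simps)
    also have "\<dots> \<le> (3 + \<beta>) / ((1 + \<beta>) * real e / 2)" using rlow b v1 rpos by (intro divide_left_mono) auto
    also have "\<dots> = 2 * (3 + \<beta>) / ((1 + \<beta>) * real e)" by simp
    also have "\<dots> \<le> 2 * (3 + \<beta>) / ((1 + \<beta>) * real v)" using b v1 v by (intro divide_left_mono mult_left_mono) auto
    finally show "ln ((2 + \<beta>) * real e) - ln (Dn \<beta> (e-1) + 1) \<le> 2 * (3 + \<beta>) / ((1 + \<beta>) * real v)"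
      unfolding r_def .
  qed
  have eq: "ln (sig \<beta> v e) - ln (tau \<beta> v e) = ((\<Sum>s\<in>{v..<e}. ln (1 + 1 / Dn \<beta> s)) - g * (ln (real e) - ln (real v)))
      + (ln ((2 + \<beta>) * real e) - ln (Dn \<beta> (e-1) + 1))"
    unfolding lsig ltau using split lD by linarith
  have "\<bar>ln (sig \<beta> v e) - ln (tau \<beta> v e)\<bar> \<le> 2 * K0 \<beta> / real v + 2 * (3 + \<beta>) / ((1 + \<beta>) * real v)"
    unfolding eq using S R by linarith
  also have "\<dots> = K4 \<beta> / real v" unfolding K4_def by (simp add: add_divide_distrib)
  finally show ?thesis .
qed

lemma ln_bound_exp:
  fixes x y d :: real
  assumes "x > 0" "y > 0" "\<bar>ln x - ln y\<bar> \<le> d"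
  shows "x \<le> y * exp d" "y * exp (- d) \<le> x"
proof -
  have "exp (ln x - ln y) = x / y" using assms by (simp add: exp_diff)
  then have "x = y * exp (ln x - ln y)" using assms by simp
  then show "x \<le> y * exp d" "y * exp (- d) \<le> x" using assms by (metis abs_le_D1 abs_le_D2 exp_le_cancel_iff
        mult_left_mono less_imp_le minus_le_iff)+
qed


lemma grp_ln:
  assumes m: "m \<ge> 1" and g: "g \<ge> 1" and u: "u \<in> grp m g"
  shows "0 \<le> ln (real (g*m)) - ln (real u)" "ln (real (g*m)) - ln (real u) \<le> (real m - 1) / real g"
proof -
  have u1: "u \<ge> g" using grp_ge[OF g m u] .
  have ub: "u \<le> g*m" "(g-1)*m + 1 \<le> u" using u unfolding grp_def by auto
  have up: "real u > 0" using u1 g by simp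
  have f1: "real u \<le> real g * real m" using ub(1) by (metis of_nat_le_iff of_nat_mult)
  have f2: "0 < real g * real m" using g m by simp
  have "ln (real u) \<le> ln (real (g*m))" using up f1 f2 by (subst ln_le_cancel_iff) auto
  then show "0 \<le> ln (real (g*m)) - ln (real u)" by simp
  have "ln (real (g*m)) - ln (real u) = ln (real (g*m) / real u)" using up ub g m by (simp add: ln_divide_pos)
  also have "\<dots> \<le> real (g*m) / real u - 1" by (rule ln_le_minus_one) (use up g m in simp)
  also have "\<dots> = (real (g*m) - real u) / real u" using up by (simp add: field_simps)
  also have "\<dots> \<le> (real m - 1) / real u"
  proof (rule divide_right_mono)
    have "real ((g-1)*m + 1) \<le> real u" using ub by linarith
    moreover have "real ((g-1)*m + 1) = real (g*m) - real m + 1" using g by (simp add: of_nat_diff algebra_simps)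
    ultimately show "real (g*m) - real u \<le> real m - 1" by linarith
  qed (use up in auto)
  also have "\<dots> \<le> (real m - 1) / real g" using u1 g m by (intro divide_left_mono) auto
  finally show "ln (real (g*m)) - ln (real u) \<le> (real m - 1) / real g" .
qed

lemma ln_tau: "\<beta> > 0 \<Longrightarrow> 1 \<le> v \<Longrightarrow> 1 \<le> e \<Longrightarrow>
  ln (tau \<beta> v e) = (1 / (2 + \<beta>)) * (ln (real e) - ln (real v)) - ln (2 + \<beta>) - ln (real e)"
  unfolding tau_def by (simp add: ln_div ln_mult)

lemma tau_rep:
  assumes b: "\<beta> > 0" and m: "m \<ge> 1" and a: "a \<ge> 1" and g: "a \<le> g1" "a \<le> g2"
    and v: "v \<in> grp m g1" and e: "e \<in> grp m g2"
  shows "\<bar>ln (tau \<beta> v e) - ln (tau \<beta> (g1*m) (g2*m))\<bar> \<le> (real m - 1) / real a"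
proof -
  define \<gamma> where "\<gamma> = 1 / (2 + \<beta>)"
  have g1: "g1 \<ge> 1" "g2 \<ge> 1" using g a by auto
  have v1: "v \<ge> 1" "e \<ge> 1" using grp_ge[OF g1(1) m v] grp_ge[OF g1(2) m e] g1 by auto
  have gm: "g1 * m \<ge> 1" "g2 * m \<ge> 1" using g1 m by auto
  have ga: "0 < \<gamma>" "\<gamma> \<le> 1" unfolding \<gamma>_def using b by auto
  note dv = grp_ln[OF m g1(1) v] and de = grp_ln[OF m g1(2) e]
  define \<delta>v where "\<delta>v = ln (real (g1*m)) - ln (real v)"
  define \<delta>e where "\<delta>e = ln (real (g2*m)) - ln (real e)"
  have eq: "ln (tau \<beta> v e) - ln (tau \<beta> (g1*m) (g2*m)) = (1 - \<gamma>) * \<delta>e + \<gamma> * \<delta>v"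
    unfolding ln_tau[OF b v1] ln_tau[OF b gm] \<delta>v_def \<delta>e_def \<gamma>_def[symmetric] by (simp add: algebra_simps)
  have m0: "real m - 1 \<ge> 0" using m by simp
  have b1: "\<delta>e \<le> (real m - 1) / real a"
    using de(2) divide_left_mono[OF _ m0, of "real a" "real g2"] a g unfolding \<delta>e_def by auto
  have b2: "\<delta>v \<le> (real m - 1) / real a"
    using dv(2) divide_left_mono[OF _ m0, of "real a" "real g1"] a g unfolding \<delta>v_def by auto
  have p1: "(1 - \<gamma>) * \<delta>e \<ge> 0" "\<gamma> * \<delta>v \<ge> 0" using dv(1) de(1) ga unfolding \<delta>v_def \<delta>e_def by auto
  have "(1 - \<gamma>) * \<delta>e \<le> (1 - \<gamma>) * ((real m - 1) / real a)" using b1 ga by (intro mult_left_mono) auto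
  moreover have "\<gamma> * \<delta>v \<le> \<gamma> * ((real m - 1) / real a)" using b2 ga by (intro mult_left_mono) auto
  moreover have "(1 - \<gamma>) * ((real m - 1) / real a) + \<gamma> * ((real m - 1) / real a) = (real m - 1) / real a"
    by (simp only: distrib_right[symmetric]) simp
  ultimately have "(1 - \<gamma>) * \<delta>e + \<gamma> * \<delta>v \<le> (real m - 1) / real a" by linarith
  then show ?thesis unfolding eq using p1 by simp
qed

definition rho :: "real \<Rightarrow> (nat \<times> nat) set \<Rightarrow> nat \<Rightarrow> real" where
  "rho \<beta> E N = (\<Prod>u\<in>{1..N}. pochhammer (1 + \<beta>) (pend E u u))"

lemma pend_le: "finite E \<Longrightarrow> pend E t u \<le> card E"
  unfolding pend_def by (rule card_mono) auto

lemma init_rho: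
  assumes b: "\<beta> > 0" and gE: "good E" and cE: "card E \<le> 3" and aE: "\<forall>p\<in>E. a \<le> snd p" and a: "a \<ge> 1"
  shows "init \<beta> E N \<le> rho \<beta> E N" "rho \<beta> E N * exp (- ln ((\<beta> + 3) / \<beta>) / real a) \<le> init \<beta> E N"
    "rho \<beta> E N > 0"
proof -
  have fE: "finite E" using gE unfolding good_def by auto
  have rpos: "rho \<beta> E N > 0" unfolding rho_def using b by (intro prod_pos pochhammer_pos) auto
  show "rho \<beta> E N > 0" by (rule rpos)
  define k1 where "k1 = pend E 1 1"
  define r where "r = \<beta> / (\<beta> + real k1)"
  have r: "r \<le> 1" "r > 0" unfolding r_def using b by auto
  have eq: "init \<beta> E N = rho \<beta> E N * (if N \<ge> 1 then r else 1)"
  proof (cases "N \<ge> 1")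
    case True
    have s: "{1..N} = insert 1 {2..N}" using True by auto
    have rest: "(\<Prod>u\<in>{2..N}. pochhammer (w0 \<beta> u) (pend E u u)) = (\<Prod>u\<in>{2..N}. pochhammer (1 + \<beta>) (pend E u u))"
      by (rule prod.cong) (auto simp: w0_def)
    have p1: "pochhammer \<beta> k1 = pochhammer (1 + \<beta>) k1 * r"
      using poch_shift[of \<beta> k1] b unfolding r_def by (simp add: field_simps add.commute)
    show ?thesis unfolding init_def rho_def s using True rest p1
      by (simp add: w0_def k1_def algebra_simps)
  next
    case False then show ?thesis unfolding init_def rho_def by simp
  qed
  show "init \<beta> E N \<le> rho \<beta> E N" unfolding eq using r rpos by (auto simp: mult_le_cancel_left1)
  have L0: "0 \<le> ln ((\<beta> + 3) / \<beta>) / real a" by (intro divide_nonneg_nonneg ln_ge_zero) (use b in auto)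
  have low: "exp (- ln ((\<beta> + 3) / \<beta>) / real a) \<le> (if N \<ge> 1 then r else 1)"
  proof (cases "k1 = 0")
    case True
    have "exp (- ln ((\<beta> + 3) / \<beta>) / real a) \<le> 1" using b a by (simp add: divide_nonneg_nonneg)
    moreover have "r = 1" using True b unfolding r_def by simp
    ultimately show ?thesis by simp
  next
    case False
    then obtain p where p: "p \<in> E" "snd p = 1" unfolding k1_def pend_def
      by (metis (mono_tags, lifting) card.empty empty_Collect_eq)
    then have a1: "a = 1" using aE a by force
    have k3: "k1 \<le> 3" using pend_le[OF fE] cE unfolding k1_def by (meson le_trans)
    have "exp (- ln ((\<beta> + 3) / \<beta>) / real a) = \<beta> / (\<beta> + 3)" using a1 b
      by (simp add: exp_minus ln_div exp_diff)
    also have "\<dots> \<le> r" unfolding r_def using k3 b by (intro divide_left_mono) auto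
    finally show ?thesis using r L0 by auto
  qed
  show "rho \<beta> E N * exp (- ln ((\<beta> + 3) / \<beta>) / real a) \<le> init \<beta> E N"
    unfolding eq using low rpos L0 by (intro mult_left_mono) auto
qed


lemma K4_pos: "\<beta> > 0 \<Longrightarrow> K4 \<beta> \<ge> 0"
  unfolding K4_def K0_def by (intro add_nonneg_nonneg) auto

lemma sig_T:
  assumes b: "\<beta> > 0" and m: "m \<ge> 1" and a: "a \<ge> 1" and g: "a \<le> g1" "a \<le> g2"
    and v: "v \<in> grp m g1" and e: "e \<in> grp m g2" and ve: "v < e"
  shows "tau \<beta> (g1*m) (g2*m) * exp (- ((K4 \<beta> + real m - 1) / real a)) \<le> sig \<beta> v e"
        "sig \<beta> v e \<le> tau \<beta> (g1*m) (g2*m) * exp ((K4 \<beta> + real m - 1) / real a)"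
proof -
  have g1: "g1 \<ge> 1" "g2 \<ge> 1" using g a by auto
  have va: "v \<ge> a" using grp_ge[OF g1(1) m v] g by simp
  have v1: "v \<ge> 1" using va a by simp
  have gm: "g1 * m \<ge> 1" "g2 * m \<ge> 1" using g1 m by auto
  have s1: "\<bar>ln (sig \<beta> v e) - ln (tau \<beta> v e)\<bar> \<le> K4 \<beta> / real a"
  proof -
    have "K4 \<beta> / real v \<le> K4 \<beta> / real a" using K4_pos[OF b] va a by (intro divide_left_mono) auto
    then show ?thesis using ln_sig_tau[OF b v1 ve] by linarith
  qed
  have s2: "\<bar>ln (tau \<beta> v e) - ln (tau \<beta> (g1*m) (g2*m))\<bar> \<le> (real m - 1) / real a"
    by (rule tau_rep[OF b m a g v e])
  have s3: "\<bar>ln (sig \<beta> v e) - ln (tau \<beta> (g1*m) (g2*m))\<bar> \<le> (K4 \<beta> + real m - 1) / real a"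
  proof -
    have "(K4 \<beta> + real m - 1) / real a = K4 \<beta> / real a + (real m - 1) / real a" by (simp add: add_divide_distrib diff_divide_distrib)
    then show ?thesis using s1 s2 by linarith
  qed
  have p1: "sig \<beta> v e > 0" using sig_pos[OF b v1 ve] .
  have p2: "tau \<beta> (g1*m) (g2*m) > 0" using tau_pos[OF b gm] .
  note r = ln_bound_exp[OF p1 p2 s3]
  show "tau \<beta> (g1*m) (g2*m) * exp (- ((K4 \<beta> + real m - 1) / real a)) \<le> sig \<beta> v e" using r(2) .
  show "sig \<beta> v e \<le> tau \<beta> (g1*m) (g2*m) * exp ((K4 \<beta> + real m - 1) / real a)" using r(1) .
qed

context tri
begin

lemma pend_E3: assumes mem: "x \<in> B" "y \<in> C" "z \<in> C" "z \<noteq> y" "i \<in> A" "j \<in> B" "l \<in> A"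
  shows "pend (E3 x i y j z l) u u = card {p\<in>E3 x i y j z l. snd p = u}"
proof -
  note f = mem_facts[OF mem]
  show ?thesis unfolding pend_def by (rule arg_cong[where f=card]) (use f in \<open>auto simp: E3_def\<close>)
qed

lemma rho_E3:
  assumes b: "\<beta> > 0" and mem: "x \<in> B" "y \<in> C" "z \<in> C" "z \<noteq> y" "i \<in> A" "j \<in> B" "l \<in> A"
  shows "rho \<beta> (E3 x i y j z l) (n*m) = (1 + \<beta>)^3 + ind (i = l) * (1 + \<beta>)^2"
proof -
  note f = mem_facts[OF mem]
  let ?E = "E3 x i y j z l"
  define h where "h u = pochhammer (1 + \<beta>) (card {p\<in>?E. snd p = u})" for u
  have "rho \<beta> ?E (n*m) = (\<Prod>u\<in>{1..n*m}. h u)" unfolding rho_def h_def pend_E3[OF mem] ..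
  also have "\<dots> = (\<Prod>u\<in>{i,j,l}. h u)"
  proof (rule prod.mono_neutral_right)
    show "{i,j,l} \<subseteq> {1..n*m}" using f by auto
    show "\<forall>u\<in>{1..n*m} - {i,j,l}. h u = 1"
    proof
      fix u assume "u \<in> {1..n*m} - {i,j,l}"
      then have e: "{p\<in>?E. snd p = u} = {}" unfolding E3_def by auto
      show "h u = 1" unfolding h_def e by simp
    qed
  qed auto
  also have "\<dots> = (1 + \<beta>)^3 + ind (i = l) * (1 + \<beta>)^2"
  proof (cases "i = l")
    case True
    have s1: "{p\<in>?E. snd p = i} = {(x,i),(z,i)}" using True f unfolding E3_def by auto
    have s2: "{p\<in>?E. snd p = j} = {(y,j)}" using True f unfolding E3_def by auto
    have c1: "card {(x,i),(z,i)} = 2" using f by auto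
    have "{i,j,l} = {i,j}" using True by auto
    then have "(\<Prod>u\<in>{i,j,l}. h u) = h i * h j" using f by simp
    also have "\<dots> = (1 + \<beta>) * (2 + \<beta>) * (1 + \<beta>)" unfolding h_def s1 s2 c1
      by (simp add: numeral_2_eq_2 pochhammer_Suc algebra_simps)
    finally show ?thesis using True by (simp add: ind_def power2_eq_square power3_eq_cube algebra_simps)
  next
    case False
    have s1: "{p\<in>?E. snd p = i} = {(x,i)}" using False f unfolding E3_def by auto
    have s2: "{p\<in>?E. snd p = j} = {(y,j)}" using False f unfolding E3_def by auto
    have s3: "{p\<in>?E. snd p = l} = {(z,l)}" using False f unfolding E3_def by auto
    have "(\<Prod>u\<in>{i,j,l}. h u) = h i * h j * h l" using f False by simp
    also have "\<dots> = (1 + \<beta>)^3" unfolding h_def s1 s2 s3 by (simp add: power3_eq_cube)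
    finally show ?thesis using False by (simp add: ind_def)
  qed
  finally show ?thesis .
qed

definition Tprod :: "real \<Rightarrow> real" where
  "Tprod \<beta> = tau \<beta> (a*m) (b*m) * tau \<beta> (b*m) (c*m) * tau \<beta> (a*m) (c*m)"

definition Kall :: "real \<Rightarrow> real" where
  "Kall \<beta> = ln ((\<beta> + 3) / \<beta>) + (18 / \<beta>^2 + 9 / \<beta>) + 3 * (K4 \<beta> + real m - 1)"

lemma Tprod_pos: "\<beta> > 0 \<Longrightarrow> Tprod \<beta> > 0"
  unfolding Tprod_def using m1 a1 ab bc by (intro mult_pos_pos tau_pos) auto

lemma term_bounds:
  assumes b: "\<beta> > 0" and mem: "x \<in> B" "y \<in> C" "z \<in> C" "z \<noteq> y" "i \<in> A" "j \<in> B" "l \<in> A"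
  shows "((1 + \<beta>)^3 + ind (i = l) * (1 + \<beta>)^2) * Tprod \<beta> * exp (- Kall \<beta> / real a) \<le> Pterm \<beta> (n*m) (E3 x i y j z l)"
    "Pterm \<beta> (n*m) (E3 x i y j z l) \<le> ((1 + \<beta>)^3 + ind (i = l) * (1 + \<beta>)^2) * Tprod \<beta> * exp (Kall \<beta> / real a)"
proof -
  note f = mem_facts[OF mem]
  let ?E = "E3 x i y j z l"
  let ?N = "n*m"
  define \<delta> where "\<delta> = (K4 \<beta> + real m - 1) / real a"
  define L where "L = ln ((\<beta> + 3) / \<beta>) / real a"
  define Kg where "Kg = (18 / \<beta>^2 + 9 / \<beta>) / real a"
  have L0: "L \<ge> 0" unfolding L_def by (intro divide_nonneg_nonneg ln_ge_zero) (use b in auto)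
  have Kg0: "Kg \<ge> 0" unfolding Kg_def using b by auto
  have Ka: "Kall \<beta> / real a = L + Kg + 3 * \<delta>" unfolding Kall_def L_def Kg_def \<delta>_def
    by (simp add: add_divide_distrib)
  have gE: "good ?E" by (rule good_E3[OF mem])
  have cE: "card ?E \<le> 3" unfolding E3_def by (simp add: card_insert_if)
  have aE: "\<forall>p\<in>?E. a \<le> snd p" using f unfolding E3_def by auto
  have NE: "\<forall>p\<in>?E. fst p \<le> ?N" using f unfolding E3_def by auto
  note pc = prod_compare[OF b gE cE a1 aE NE]
  note ir = init_rho[OF b gE cE aE a1, of ?N]
  have sigprod: "(\<Prod>p\<in>?E. sig \<beta> (snd p) (fst p)) = sig \<beta> i x * sig \<beta> j y * sig \<beta> l z"
  proof -
    have d: "(x,i) \<notin> {(y,j),(z,l)}" "(y,j) \<notin> {(z,l)}" using f mem(4) by auto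
    show ?thesis unfolding E3_def using d by simp
  qed
  have bc': "b \<le> c" "a \<le> c" "a \<le> b" using ab bc by auto
  note si = sig_T[OF b m1 a1 order_refl less_imp_le[OF ab] mem(5)[unfolded A_def] mem(1)[unfolded B_def] f(1)]
  note sj = sig_T[OF b m1 a1 less_imp_le[OF ab] bc'(2) mem(6)[unfolded B_def] mem(2)[unfolded C_def] f(2)]
  note sl = sig_T[OF b m1 a1 order_refl bc'(2) mem(7)[unfolded A_def] mem(3)[unfolded C_def] f(3)]
  have tp: "tau \<beta> (a*m) (b*m) > 0" "tau \<beta> (b*m) (c*m) > 0" "tau \<beta> (a*m) (c*m) > 0"
    using m1 a1 ab bc by (auto intro!: tau_pos[OF b])
  have ep: "exp (- \<delta>) > 0" by simp
  have Sup: "(\<Prod>p\<in>?E. sig \<beta> (snd p) (fst p)) \<le> Tprod \<beta> * exp (3 * \<delta>)"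
  proof -
    have "sig \<beta> i x * sig \<beta> j y * sig \<beta> l z \<le> (tau \<beta> (a*m) (b*m) * exp \<delta>) * (tau \<beta> (b*m) (c*m) * exp \<delta>) * (tau \<beta> (a*m) (c*m) * exp \<delta>)"
      using si(2) sj(2) sl(2) sig_pos[OF b f(6) f(1)] sig_pos[OF b f(7) f(2)] sig_pos[OF b f(8) f(3)]
      unfolding \<delta>_def by (intro mult_mono) (auto intro!: mult_nonneg_nonneg)
    also have "\<dots> = Tprod \<beta> * exp (3 * \<delta>)" unfolding Tprod_def
      by (simp add: exp_add[symmetric] algebra_simps)
    finally show ?thesis unfolding sigprod .
  qed
  have Slo: "Tprod \<beta> * exp (- (3 * \<delta>)) \<le> (\<Prod>p\<in>?E. sig \<beta> (snd p) (fst p))"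
  proof -
    have "(tau \<beta> (a*m) (b*m) * exp (-\<delta>)) * (tau \<beta> (b*m) (c*m) * exp (-\<delta>)) * (tau \<beta> (a*m) (c*m) * exp (-\<delta>))
        \<le> sig \<beta> i x * sig \<beta> j y * sig \<beta> l z"
      using si(1) sj(1) sl(1) tp ep sig_pos[OF b f(6) f(1)] sig_pos[OF b f(7) f(2)] sig_pos[OF b f(8) f(3)]
      unfolding \<delta>_def by (intro mult_mono) (auto intro!: mult_nonneg_nonneg)
    moreover have "(tau \<beta> (a*m) (b*m) * exp (-\<delta>)) * (tau \<beta> (b*m) (c*m) * exp (-\<delta>)) * (tau \<beta> (a*m) (c*m) * exp (-\<delta>))
        = Tprod \<beta> * exp (- (3 * \<delta>))" unfolding Tprod_def
      by (simp add: exp_add[symmetric] algebra_simps)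
    ultimately show ?thesis unfolding sigprod by simp
  qed
  have "0 < Tprod \<beta> * exp (- (3 * \<delta>))" using Tprod_pos[OF b] by simp
  then have sp: "0 \<le> (\<Prod>p\<in>?E. sig \<beta> (snd p) (fst p))" using Slo by linarith
  have gpos: "(\<Prod>s\<in>{1..<?N}. gfac \<beta> ?E s) \<ge> 0"
    using gfac_hfac(3)[OF b gE cE aE] by (intro prod_nonneg) (auto simp: less_imp_le)
  have ipos: "init \<beta> ?E ?N \<ge> 0" using ir(2) ir(3) by (smt (verit) exp_gt_zero mult_pos_pos)
  have rho: "rho \<beta> ?E ?N = (1 + \<beta>)^3 + ind (i = l) * (1 + \<beta>)^2" by (rule rho_E3[OF b mem])
  show "Pterm \<beta> ?N ?E \<le> ((1 + \<beta>)^3 + ind (i = l) * (1 + \<beta>)^2) * Tprod \<beta> * exp (Kall \<beta> / real a)"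
  proof -
    have "Pterm \<beta> ?N ?E \<le> rho \<beta> ?E ?N * (\<Prod>p\<in>?E. sig \<beta> (snd p) (fst p))"
      unfolding Pterm_def using ir(1) pc(1) gpos ipos by (intro mult_mono) auto
    also have "\<dots> \<le> rho \<beta> ?E ?N * (Tprod \<beta> * exp (3 * \<delta>))"
      using Sup ir(3) by (intro mult_left_mono) auto
    also have "\<dots> \<le> rho \<beta> ?E ?N * (Tprod \<beta> * exp (Kall \<beta> / real a))"
      using ir(3) Tprod_pos[OF b] L0 Kg0 unfolding Ka by (intro mult_left_mono) auto
    finally show ?thesis unfolding rho by (simp add: algebra_simps)
  qed
  show "((1 + \<beta>)^3 + ind (i = l) * (1 + \<beta>)^2) * Tprod \<beta> * exp (- Kall \<beta> / real a) \<le> Pterm \<beta> ?N ?E"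
  proof -
    have G: "(\<Prod>p\<in>?E. sig \<beta> (snd p) (fst p)) * exp (- Kg) \<le> (\<Prod>s\<in>{1..<?N}. gfac \<beta> ?E s)"
    proof -
      have "(\<Prod>p\<in>?E. sig \<beta> (snd p) (fst p)) * exp (- Kg) \<le> (\<Prod>s\<in>{1..<?N}. gfac \<beta> ?E s) * exp Kg * exp (- Kg)"
        using pc(2) unfolding Kg_def by (intro mult_right_mono) auto
      also have "\<dots> = (\<Prod>s\<in>{1..<?N}. gfac \<beta> ?E s)" by (simp add: exp_minus)
      finally show ?thesis .
    qed
    have "rho \<beta> ?E ?N * Tprod \<beta> * exp (- Kall \<beta> / real a)
        = (rho \<beta> ?E ?N * exp (- L)) * ((Tprod \<beta> * exp (- (3 * \<delta>))) * exp (- Kg))"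
    proof -
      have e1: "- Kall \<beta> / real a = (- L) + (- (3*\<delta>)) + (- Kg)" using Ka minus_divide_left[of "Kall \<beta>" "real a"] by linarith
      have ex: "exp (- Kall \<beta> / real a) = exp (- L) * exp (- (3*\<delta>)) * exp (- Kg)" unfolding e1 exp_add by simp
      show ?thesis unfolding ex by (simp add: algebra_simps)
    qed
    also have "\<dots> \<le> init \<beta> ?E ?N * ((\<Prod>p\<in>?E. sig \<beta> (snd p) (fst p)) * exp (- Kg))"
      using ir(2) Slo ipos Tprod_pos[OF b] sp unfolding L_def
      by (intro mult_mono) (auto intro!: mult_nonneg_nonneg)
    also have "\<dots> \<le> init \<beta> ?E ?N * (\<Prod>s\<in>{1..<?N}. gfac \<beta> ?E s)"
      using G ipos by (intro mult_left_mono) auto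
    finally show ?thesis unfolding Pterm_def rho by simp
  qed
qed

end

definition KK :: "real \<Rightarrow> nat \<Rightarrow> real" where
  "KK \<beta> m = ln ((\<beta> + 3) / \<beta>) + (18 / \<beta>^2 + 9 / \<beta>) + 3 * (K4 \<beta> + real m - 1)"

lemma coef_id:
  fixes r \<beta> :: real assumes "2 + \<beta> \<noteq> 0"
  shows "r*(r-1)*(1+\<beta>)^2/(2+\<beta>)^2 + r*(r-1)^2*(1+\<beta>)^3/(2+\<beta>)^3 = r*(r-1)*(r*(1+\<beta>)^3+(1+\<beta>)^2)/(2+\<beta>)^3"
proof -
  have "r*(r-1)*(1+\<beta>)^2/(2+\<beta>)^2 = r*(r-1)*(1+\<beta>)^2*(2+\<beta>)/(2+\<beta>)^3"
    using assms by (simp add: power2_eq_square power3_eq_cube)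
  then have "r*(r-1)*(1+\<beta>)^2/(2+\<beta>)^2 + r*(r-1)^2*(1+\<beta>)^3/(2+\<beta>)^3 = (r*(r-1)*(1+\<beta>)^2*(2+\<beta>) + r*(r-1)^2*(1+\<beta>)^3)/(2+\<beta>)^3"
    by (simp add: add_divide_distrib)
  also have "r*(r-1)*(1+\<beta>)^2*(2+\<beta>) + r*(r-1)^2*(1+\<beta>)^3 = r*(r-1)*(r*(1+\<beta>)^3+(1+\<beta>)^2)"
    by algebra
  finally show ?thesis .
qed

lemma sum_rel_bound:
  fixes f g :: "'a \<Rightarrow> real"
  assumes "\<And>t. t \<in> S \<Longrightarrow> \<bar>f t - g t\<bar> \<le> c * g t"
  shows "\<bar>sum f S - sum g S\<bar> \<le> c * sum g S"
proof -
  have "\<bar>sum f S - sum g S\<bar> = \<bar>\<Sum>t\<in>S. f t - g t\<bar>" by (simp add: sum_subtractf)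
  also have "\<dots> \<le> (\<Sum>t\<in>S. \<bar>f t - g t\<bar>)" by (rule sum_abs)
  also have "\<dots> \<le> (\<Sum>t\<in>S. c * g t)" by (rule sum_mono) (rule assms)
  also have "\<dots> = c * sum g S" by (simp add: sum_distrib_left)
  finally show ?thesis .
qed

lemma exp_m1: "(y::real) \<ge> 0 \<Longrightarrow> exp y - 1 \<le> y * exp y"
proof -
  assume y: "y \<ge> 0"
  have "1 - y \<le> exp (- y)" using exp_ge_add_one_self[of "-y"] by simp
  then have "(1 - y) * exp y \<le> exp (- y) * exp y" by (intro mult_right_mono) auto
  then show ?thesis by (simp add: exp_minus algebra_simps)
qed

lemma rel_pointwise:
  fixes P I K :: real
  assumes I: "I \<ge> 0" and K: "K \<ge> 0" and a: "a \<ge> 1"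
    and lo: "I * exp (- K / a) \<le> P" and up: "P \<le> I * exp (K / a)"
  shows "\<bar>P - I\<bar> \<le> K * exp K / a * I"
proof -
  have ka: "K / a \<ge> 0" "K / a \<le> K" using K a by (auto simp: divide_le_eq mult_le_cancel_left1 mult_le_cancel_left2)
  have e1: "exp (K / a) - 1 \<le> K / a * exp (K / a)" by (rule exp_m1[OF ka(1)])
  also have "\<dots> \<le> K / a * exp K" using ka by (intro mult_left_mono) auto
  finally have e1': "exp (K / a) - 1 \<le> K * exp K / a" by simp
  have e2: "1 - exp (- K / a) \<le> K / a" using exp_ge_add_one_self[of "- K / a"] by simp
  also have "\<dots> \<le> K * exp K / a" using K a by (intro divide_right_mono) (auto simp: mult_le_cancel_left1)
  finally have e2': "1 - exp (- K / a) \<le> K * exp K / a" .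
  have "P - I \<le> I * (exp (K / a) - 1)" using up by (simp add: algebra_simps)
  also have "\<dots> \<le> I * (K * exp K / a)" using e1' I by (intro mult_left_mono) auto
  finally have u: "P - I \<le> K * exp K / a * I" by (simp add: algebra_simps)
  have "I - P \<le> I * (1 - exp (- K / a))" using lo by (simp add: algebra_simps)
  also have "\<dots> \<le> I * (K * exp K / a)" using e2' I by (intro mult_left_mono) auto
  finally have l: "I - P \<le> K * exp K / a * I" by (simp add: algebra_simps)
  show ?thesis using u l by linarith
qed

context tri
begin

lemma Kall_KK: "Kall \<beta> = KK \<beta> m" unfolding Kall_def KK_def ..

lemma KK_nonneg: "\<beta> > 0 \<Longrightarrow> KK \<beta> m \<ge> 0"
proof -
  assume b: "\<beta> > 0"
  have "ln ((\<beta> + 3) / \<beta>) \<ge> 0" by (intro ln_ge_zero) (use b in auto)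
  moreover have "18 / \<beta>^2 + 9 / \<beta> \<ge> 0" using b by auto
  moreover have "K4 \<beta> + real m - 1 \<ge> 0" using K4_pos[OF b] m1 by simp
  ultimately show ?thesis unfolding KK_def by simp
qed

lemma cards: "card A = m" "card B = m" "card C = m"
  unfolding A_def B_def C_def using card_grp a1 ab bc by auto

lemma Pow_eq:
  assumes b: "\<beta> > 0"
  shows "Tprod \<beta> * ((2 + \<beta>)^3 * real m^3) = (1 / (real a ^ 2 * real b powr (2 + \<beta>) * real c powr (2 + 2 * \<beta>))) powr (1 / (2 + \<beta>))"
proof -
  define g where "g = 1 / (2 + \<beta>)"
  have pa: "real a > 0" "real b > 0" "real c > 0" "real m > 0" using a1 ab bc m1 by auto
  have t: "tau \<beta> (u * m) (v * m) = (real v / real u) powr g / ((2 + \<beta>) * real v * real m)" if "u \<ge> 1" for u v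
    unfolding tau_def g_def using pa that by (simp add: algebra_simps)
  have L: "Tprod \<beta> * ((2 + \<beta>)^3 * real m^3) = (real b / real a) powr g * (real c / real b) powr g * (real c / real a) powr g / (real b * real c * real c)"
  proof -
    have b1: "b \<ge> 1" using ab a1 by simp
    have t1: "tau \<beta> (a * m) (b * m) = (real b / real a) powr g / ((2 + \<beta>) * real b * real m)" by (rule t[OF a1])
    have t2: "tau \<beta> (b * m) (c * m) = (real c / real b) powr g / ((2 + \<beta>) * real c * real m)" by (rule t[OF b1])
    have t3: "tau \<beta> (a * m) (c * m) = (real c / real a) powr g / ((2 + \<beta>) * real c * real m)" by (rule t[OF a1])
    have hl: "(x / (k * bb * mm)) * (y / (k * cc * mm)) * (z / (k * cc * mm)) * (k^3 * mm^3) = x * y * z / (bb * cc * cc)"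
      if "k \<noteq> 0" "mm \<noteq> 0" "bb \<noteq> 0" "cc \<noteq> 0" for x y z k bb cc mm :: real
      using that by (simp add: field_simps power3_eq_cube)
    have "(2 + \<beta>) \<noteq> 0" using b by simp
    then show ?thesis unfolding Tprod_def t1 t2 t3 using hl pa by simp
  qed
  define X where "X = real a ^ 2 * real b powr (2 + \<beta>) * real c powr (2 + 2 * \<beta>)"
  have Xp: "X > 0" unfolding X_def using pa by simp
  have lnX: "ln X = 2 * ln (real a) + (2 + \<beta>) * ln (real b) + (2 + 2 * \<beta>) * ln (real c)"
    unfolding X_def using pa by (simp add: ln_mult ln_realpow)
  have lnR: "ln ((1 / X) powr g) = - g * ln X" using Xp by (simp add: ln_div)
  have lpos: "(real b / real a) powr g * (real c / real b) powr g * (real c / real a) powr g / (real b * real c * real c) > 0"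
    using pa by simp
  have lnL: "ln ((real b / real a) powr g * (real c / real b) powr g * (real c / real a) powr g / (real b * real c * real c))
     = g * (ln (real b) - ln (real a)) + g * (ln (real c) - ln (real b)) + g * (ln (real c) - ln (real a)) - (ln (real b) + ln (real c) + ln (real c))"
    using pa by (simp add: ln_mult ln_div)
  have g1: "g * (2 + \<beta>) = 1" "g * (2 + 2 * \<beta>) = 2 - 2 * g" unfolding g_def using b by (simp_all add: field_simps)
  have "ln ((real b / real a) powr g * (real c / real b) powr g * (real c / real a) powr g / (real b * real c * real c)) = ln ((1 / X) powr g)"
  proof -
    have "- g * ln X = -(2*g*ln (real a)) - (g*(2 + \<beta>))*ln (real b) - (g*(2 + 2*\<beta>))*ln (real c)"
      unfolding lnX by (simp add: algebra_simps)
    also have "\<dots> = -(2*g*ln (real a)) - ln (real b) - (2 - 2*g)*ln (real c)" unfolding g1 by simp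
    finally have R: "- g * ln X = -(2*g*ln (real a)) - ln (real b) - (2 - 2*g)*ln (real c)" .
    show ?thesis unfolding lnL lnR R by (simp add: algebra_simps)
  qed
  then have "(real b / real a) powr g * (real c / real b) powr g * (real c / real a) powr g / (real b * real c * real c) = (1 / X) powr g"
    using lpos Xp by (subst (asm) ln_inj_iff) auto
  then show ?thesis unfolding L X_def g_def .
qed

lemma ideal_sum:
  assumes b: "\<beta> > 0"
  shows "(\<Sum>x\<in>B. \<Sum>y\<in>C. \<Sum>z\<in>C - {y}. \<Sum>i\<in>A. \<Sum>j\<in>B. \<Sum>l\<in>A. ((1 + \<beta>)^3 + ind (i = l) * (1 + \<beta>)^2) * Tprod \<beta>)
     = main_term \<beta> m a b c"
proof -
  define T where "T = Tprod \<beta>"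
  define q where "q = real m * (1 + \<beta>)^3 + (1 + \<beta>)^2"
  have fA: "finite A" unfolding A_def by simp
  have l: "(\<Sum>l\<in>A. ((1 + \<beta>)^3 + ind (i = l) * (1 + \<beta>)^2) * T) = q * T" if "i \<in> A" for i
  proof -
    have "(\<Sum>l\<in>A. ((1 + \<beta>)^3 + ind (i = l) * (1 + \<beta>)^2) * T) = (\<Sum>l\<in>A. (1 + \<beta>)^3 * T) + (\<Sum>l\<in>A. ind (i = l) * ((1 + \<beta>)^2 * T))"
      by (simp add: sum.distrib algebra_simps)
    also have "(\<Sum>l\<in>A. ind (i = l) * ((1 + \<beta>)^2 * T)) = (1 + \<beta>)^2 * T"
    proof -
      have "(\<Sum>l\<in>A. ind (i = l) * ((1 + \<beta>)^2 * T)) = (\<Sum>l\<in>A. if i = l then (1 + \<beta>)^2 * T else 0)"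
        by (rule sum.cong) (auto simp: ind_def)
      also have "\<dots> = (1 + \<beta>)^2 * T" using that fA by (simp add: sum.delta)
      finally show ?thesis .
    qed
    finally show ?thesis unfolding q_def using cards by (simp add: algebra_simps)
  qed
  have cz: "card (C - {y}) = m - 1" if "y \<in> C" for y using that cards by (simp add: C_def)
  have "(\<Sum>x\<in>B. \<Sum>y\<in>C. \<Sum>z\<in>C - {y}. \<Sum>i\<in>A. \<Sum>j\<in>B. \<Sum>l\<in>A. ((1 + \<beta>)^3 + ind (i = l) * (1 + \<beta>)^2) * T)
      = (\<Sum>x\<in>B. \<Sum>y\<in>C. \<Sum>z\<in>C - {y}. \<Sum>i\<in>A. \<Sum>j\<in>B. q * T)"
    by (intro sum.cong refl) (simp add: l)
  also have "\<dots> = (\<Sum>x\<in>B. \<Sum>y\<in>C. real (m-1) * (real m * (real m * (q * T))))"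
    by (intro sum.cong refl) (simp add: cards cz)
  also have "\<dots> = real m * (real m * (real (m-1) * (real m * (real m * (q * T)))))"
    by (simp add: cards)
  also have "\<dots> = main_term \<beta> m a b c"
  proof -
    have m1': "real (m - 1) = real m - 1" using m1 by (simp add: of_nat_diff)
    have bb: "(2 + \<beta>) \<noteq> 0" using b by simp
    have "main_term \<beta> m a b c = (real m * (real m - 1) * (1 + \<beta>)^2 / (2 + \<beta>)^2
      + real m * (real m - 1)^2 * (1 + \<beta>)^3 / (2 + \<beta>)^3) * (T * ((2 + \<beta>)^3 * real m^3))"
      unfolding main_term_def T_def Pow_eq[OF b] ..
    also have "\<dots> = real m * (real m - 1) * q / (2 + \<beta>)^3 * (T * ((2 + \<beta>)^3 * real m^3))"
      using coef_id[OF bb, of "real m"] unfolding q_def by simp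
    also have "\<dots> = real m * (real m * (real (m-1) * (real m * (real m * (q * T)))))"
    proof -
      have hl2: "real m * (real m - 1) * q / K * (T * (K * real m^3)) = real m * (real m * ((real m - 1) * (real m * (real m * (q * T)))))"
        if "K \<noteq> 0" for K :: real using that by (simp add: field_simps power3_eq_cube)
      have "(2 + \<beta>)^3 \<noteq> 0" using bb by simp
      from hl2[OF this] show ?thesis unfolding m1' .
    qed
    finally show ?thesis by simp
  qed
  finally show ?thesis unfolding T_def .
qed

lemma final:
  assumes b: "\<beta> > 0"
  shows "\<bar>expected_triangles \<beta> m n a b c - main_term \<beta> m a b c\<bar> \<le> KK \<beta> m * exp (KK \<beta> m) * main_term \<beta> m a b c / real a"
proof -
  define c0 where "c0 = KK \<beta> m * exp (KK \<beta> m) / real a"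
  have "\<bar>(\<Sum>x\<in>B. \<Sum>y\<in>C. \<Sum>z\<in>C - {y}. \<Sum>i\<in>A. \<Sum>j\<in>B. \<Sum>l\<in>A. Pterm \<beta> (n*m) (E3 x i y j z l))
     - (\<Sum>x\<in>B. \<Sum>y\<in>C. \<Sum>z\<in>C - {y}. \<Sum>i\<in>A. \<Sum>j\<in>B. \<Sum>l\<in>A. ((1 + \<beta>)^3 + ind (i = l) * (1 + \<beta>)^2) * Tprod \<beta>)\<bar>
     \<le> c0 * (\<Sum>x\<in>B. \<Sum>y\<in>C. \<Sum>z\<in>C - {y}. \<Sum>i\<in>A. \<Sum>j\<in>B. \<Sum>l\<in>A. ((1 + \<beta>)^3 + ind (i = l) * (1 + \<beta>)^2) * Tprod \<beta>)"
  proof (intro sum_rel_bound)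
    fix x y z i j l assume mem: "x \<in> B" "y \<in> C" "z \<in> C - {y}" "i \<in> A" "j \<in> B" "l \<in> A"
    then have mem': "x \<in> B" "y \<in> C" "z \<in> C" "z \<noteq> y" "i \<in> A" "j \<in> B" "l \<in> A" by auto
    note tb = term_bounds[OF b mem']
    have Ip: "((1 + \<beta>)^3 + ind (i = l) * (1 + \<beta>)^2) * Tprod \<beta> \<ge> 0"
      using b Tprod_pos[OF b] by (intro mult_nonneg_nonneg) (auto simp: ind_def)
    show "\<bar>Pterm \<beta> (n*m) (E3 x i y j z l) - ((1 + \<beta>)^3 + ind (i = l) * (1 + \<beta>)^2) * Tprod \<beta>\<bar>
       \<le> c0 * (((1 + \<beta>)^3 + ind (i = l) * (1 + \<beta>)^2) * Tprod \<beta>)"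
      using rel_pointwise[OF Ip KK_nonneg[OF b], of "real a" "Pterm \<beta> (n*m) (E3 x i y j z l)"] tb a1
      unfolding c0_def Kall_KK by (simp add: algebra_simps)
  qed
  then show ?thesis unfolding expected_sum[OF b, symmetric] ideal_sum[OF b] c0_def by (simp add: algebra_simps)
qed

end

theorem mainTheorem3:
  fixes \<beta> :: real and m :: nat
  assumes "\<beta> > 0" and "m \<ge> 1"
  shows "\<exists>C. \<forall>n a b c :: nat. 1 \<le> a \<longrightarrow> a < b \<longrightarrow> b < c \<longrightarrow> c \<le> n \<longrightarrow>
           \<bar>expected_triangles \<beta> m n a b c - main_term \<beta> m a b c\<bar>
             \<le> C * main_term \<beta> m a b c / real a"
proof (intro exI allI impI)
  fix n a b c :: nat
  assume h: "1 \<le> a" "a < b" "b < c" "c \<le> n"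
  interpret tri m n a b c by unfold_locales (use h assms in auto)
  show "\<bar>expected_triangles \<beta> m n a b c - main_term \<beta> m a b c\<bar>
             \<le> KK \<beta> m * exp (KK \<beta> m) * main_term \<beta> m a b c / real a"
    by (rule final[OF assms(1)])
qed


end
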